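(* Let $0<\gamma<1$, $1<\alpha<2$, $\lambda\ge0$, $\rho>0$, $\eta\in\mathbb{R}$, $J=\sqrt{-1}$, $p=\rho+J\eta$, $K>0$, $b>0$, $T>0$, $U:[0,b]\to[0,\infty)$, $\widetilde{\lambda}_i=\lambda+pU(x_i)$. Let $G(x,p,t)$ be the exact solution of the time-tempered fractional Feynman–Kac problem described in the context. For integers $M\ge2$, $N\ge1$, $h=b/M$, $\tau>0$ with $N\tau\le T$, $x_i=ih$, $t_n=n\tau$, let $G_{i,p}^n$ be computed by the scheme $$\frac{1}{\tau^\gamma}\sum_{k=0}^{n}l_k^{(2)}e^{-J\eta U(x_i)k\tau}G_{i,p}^{n-k}-\kappa\frac{1}{h^\alpha}\sum_{j=0}^{M}w_{i,j}^\alpha G_{j,p}^n=\frac{1}{\tau^\gamma}\sum_{k=0}^{n}l_k^{2,\gamma}e^{-\widetilde{\lambda}_i n\tau}G_{i,p}^0+f(x_i,p,t_n)$$ for $1\le i\le M-1$, $1\le n\le N$, with $G_{i,p}^0=G(x_i,p,0)$ and $G_{0,p}^n=G_{M,p}^n=0$. Assume the local truncation error $r_i^n$ (the residual obtained by substituting $G(x_j,p,t_m)$ for $G_{j,p}^m$ in the scheme, moved to the right-hand side) satisfies $|r_i^n|\le C_G(\tau^2+h^2)$ for all $i,n$, with $C_G>0$ independent of $\tau,h$. Let $\varepsilon_i^n=G(x_i,p,t_n)-G_{i,p}^n$. Then $$\tau\sum_{n=1}^{N}\|\varepsilon^n\|\le\frac{C_G|\Gamma(1-\alpha)|\,b^{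\alpha+\frac12}T}{2\kappa}(\tau^2+h^2).$$
   Context: The problem: for $x\in(0,b)$, $t\in(0,T]$, $${}_C^SD_t^{\gamma,\widetilde{\lambda}}G(x,p,t)=K\nabla_x^\alpha G(x,p,t)+f(x,p,t),\quad G(x,p,0)=G_0(x,p),\quad G(x,p,t)=0\ \text{for } x\notin(0,b),$$ where $\widetilde{\lambda}=\lambda+pU(x)$, ${}_C^SD_t^{\gamma,\widetilde{\lambda}}G=D_t^{\gamma,\widetilde{\lambda}}\left[G-e^{-\widetilde{\lambda}t}G(x,p,0)\right]-\lambda^\gamma G$ with $D_t^{\gamma,\widetilde{\lambda}}G=\frac{1}{\Gamma(1-\gamma)}\left[\partial_t+\widetilde{\lambda}\right]\int_0^t(t-z)^{-\gamma}e^{-\widetilde{\lambda}(t-z)}G(x,p,z)\,dz$, and $\nabla_x^\alpha=-\kappa_\alpha({}_0D_x^\alpha+{}_xD_b^\alpha)$ is the Riesz derivative built from the left/right Riemann–Liouville derivatives of order $\alpha$. Notation: $\kappa_\alpha=\frac{1}{2\cos(\alpha\pi/2)}$, $\kappa=-K\kappa_\alpha>0$. $g_k^\beta=(-1)^k\binom{\beta}{k}$. $l_k^{2,\gamma}$ are defined by $\left((1-\zeta)+\tfrac12(1-\zeta)^2\right)^{\gamma}=\sum_k l_k^{2,\gamma}\zeta^k$. $l_0^{(2)}=l_0^{2,\gamma}-\left(\sum_{l=1}^{2}\frac1l(1-e^{-\lambda\tau})^l\right)^{\gamma}$ and $l_k^{(2)}=e^{-(\lambda+\rho U(x_i))k\tau}l_k^{2,\gamma}$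 for $k\ge1$. $w_0^\alpha=\frac{\alpha}{2}g_0^\alpha$, $w_k^\alpha=\frac{\alpha}{2}g_k^\alpha+\frac{2-\alpha}{2}g_{k-1}^\alpha$ ($k\ge1$); $w_{i,j}^\alpha=w^\alpha_{i-j+1}$ if $j<i-1$, $w_0^\alpha+w_2^\alpha$ if $j=i\pm1$, $2w_1^\alpha$ if $j=i$, $w^\alpha_{j-i+1}$ if $j>i+1$. $\|\varepsilon^n\|^2=h\sum_{i=1}^{M-1}|\varepsilon_i^n|^2$. *)

theory Defs
  imports "HOL-Analysis.Analysis"
begin

definition g_coef :: "real \<Rightarrow> nat \<Rightarrow> real" where
  "g_coef \<beta> k = (-1) ^ k * (\<beta> gchoose k)"

definition w_coef :: "real \<Rightarrow> nat \<Rightarrow> real" where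
  "w_coef \<alpha> k = (if k = 0 then \<alpha> / 2 * g_coef \<alpha> 0
                   else \<alpha> / 2 * g_coef \<alpha> k + (2 - \<alpha>) / 2 * g_coef \<alpha> (k - 1))"

definition w_mat :: "real \<Rightarrow> nat \<Rightarrow> nat \<Rightarrow> real" where
  "w_mat \<alpha> i j =
     (if j + 1 < i then w_coef \<alpha> (i - j + 1)
      else if j = i + 1 \<or> i = j + 1 then w_coef \<alpha> 0 + w_coef \<alpha> 2
      else if j = i then 2 * w_coef \<alpha> 1
      else w_coef \<alpha> (j - i + 1))"

definition l2_coef :: "real \<Rightarrow> nat \<Rightarrow> real" where
  "l2_coef \<gamma> k =
     (deriv ^^ k) (\<lambda>z. ((1 - z) + (1 - z) ^ 2 / 2) powr \<gamma>) 0 / fact k"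

definition kappa_alpha :: "real \<Rightarrow> real" where
  "kappa_alpha \<alpha> = 1 / (2 * cos (\<alpha> * pi / 2))"

definition kappa :: "real \<Rightarrow> real \<Rightarrow> real" where
  "kappa K \<alpha> = - K * kappa_alpha \<alpha>"

definition grid_x :: "real \<Rightarrow> nat \<Rightarrow> nat \<Rightarrow> real" where
  "grid_x b M i = real i * (b / real M)"

definition lam_tilde :: "real \<Rightarrow> real \<Rightarrow> real \<Rightarrow> (real \<Rightarrow> real) \<Rightarrow> real \<Rightarrow> complex" where
  "lam_tilde lam \<rho> \<eta> U y = complex_of_real lam + Complex \<rho> \<eta> * complex_of_real (U y)"

definition l2_mod :: "real \<Rightarrow> real \<Rightarrow> real \<Rightarrow> real \<Rightarrow> (real \<Rightarrow> real) \<Rightarrow> real \<Rightarrow> nat \<Rightarrow> real" where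
  "l2_mod \<gamma> lam \<rho> \<tau> U y k =
     (if k = 0 then l2_coef \<gamma> 0 - (\<Sum>l=1..(2::nat). (1 - exp (- lam * \<tau>)) ^ l / real l) powr \<gamma>
      else exp (- (lam + \<rho> * U y) * real k * \<tau>) * l2_coef \<gamma> k)"

text \<open>Left-hand side operator of the scheme applied to a grid function V (V j m ~ G_j^m).\<close>
definition scheme_L ::
  "real \<Rightarrow> real \<Rightarrow> real \<Rightarrow> real \<Rightarrow> real \<Rightarrow> real \<Rightarrow> real \<Rightarrow> nat \<Rightarrow> real \<Rightarrow> (real \<Rightarrow> real)
    \<Rightarrow> (nat \<Rightarrow> nat \<Rightarrow> complex) \<Rightarrow> nat \<Rightarrow> nat \<Rightarrow> complex" where
  "scheme_L \<gamma> \<alpha> lam \<rho> \<eta> K b M \<tau> U V i n =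
     complex_of_real (1 / \<tau> powr \<gamma>) *
       (\<Sum>k=0..n. complex_of_real (l2_mod \<gamma> lam \<rho> \<tau> U (grid_x b M i) k)
          * exp (- \<i> * complex_of_real (\<eta> * U (grid_x b M i) * real k * \<tau>)) * V i (n - k))
     - complex_of_real (kappa K \<alpha> / (b / real M) powr \<alpha>) *
       (\<Sum>j=0..M. complex_of_real (w_mat \<alpha> i j) * V j n)"

text \<open>Right-hand side of the scheme, given the initial data V0 j ~ G_j^0.\<close>
definition scheme_R ::
  "real \<Rightarrow> real \<Rightarrow> real \<Rightarrow> real \<Rightarrow> real \<Rightarrow> nat \<Rightarrow> real \<Rightarrow> (real \<Rightarrow> real)
    \<Rightarrow> (real \<Rightarrow> real \<Rightarrow> complex) \<Rightarrow> (nat \<Rightarrow> complex) \<Rightarrow> nat \<Rightarrow> nat \<Rightarrow> complex" where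
  "scheme_R \<gamma> lam \<rho> \<eta> b M \<tau> U f V0 i n =
     complex_of_real (1 / \<tau> powr \<gamma>) *
       (\<Sum>k=0..n. complex_of_real (l2_coef \<gamma> k)
          * exp (- lam_tilde lam \<rho> \<eta> U (grid_x b M i) * complex_of_real (real n * \<tau>)) * V0 i)
     + f (grid_x b M i) (real n * \<tau>)"

definition grid_norm :: "real \<Rightarrow> nat \<Rightarrow> (nat \<Rightarrow> complex) \<Rightarrow> real" where
  "grid_norm b M e = sqrt ((b / real M) * (\<Sum>i=1..M-1. (cmod (e i))\<^sup>2))"

end

theory Submission
  imports Defs "HOL-Complex_Analysis.Complex_Analysis"
begin


lemma cos_pow_le:
  fixes g th :: real
  assumes g: "0 < g" "g < 1" and th: "\<bar>th\<bar> < pi/2"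
  shows "cos th powr g \<le> cos (g * th)"
proof -
  let ?A = "{-pi/2<..<pi/2}"
  have cv: "convex_on ?A (\<lambda>x. - ln (cos x))"
  proof (rule convex_on_realI[where f' = tan])
    show "connected ?A" by simp
    fix x assume x: "x \<in> ?A"
    have "cos x > 0" using x by (auto intro!: cos_gt_zero_pi)
    then show "((\<lambda>x. - ln (cos x)) has_real_derivative tan x) (at x)"
      by (auto intro!: derivative_eq_intros simp: tan_def)
  next
    fix x y assume "x \<in> ?A" "y \<in> ?A" "x \<le> y"
    then show "tan x \<le> tan y"
      by (cases "x = y") (auto intro!: less_imp_le tan_monotone)
  qed
  have th0: "th \<in> ?A" "0 \<in> ?A" using th by auto
  have "- ln (cos (g * th + (1 - g) * 0)) \<le> g * (- ln (cos th)) + (1 - g) * (- ln (cos 0))"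
    using convex_onD[OF cv, of "1-g" th 0] th0 g by auto
  then have 1: "g * ln (cos th) \<le> ln (cos (g * th))" by simp
  have c1: "cos th > 0" using th by (auto intro!: cos_gt_zero_pi)
  have c2: "cos (g * th) > 0"
  proof -
    have "\<bar>g * th\<bar> = g * \<bar>th\<bar>" using g by (simp add: abs_mult)
    moreover have "g * \<bar>th\<bar> \<le> \<bar>th\<bar>" using g by (simp add: mult_left_le_one_le)
    ultimately have "\<bar>g * th\<bar> < pi/2" using th by linarith
    then show ?thesis by (auto intro!: cos_gt_zero_pi)
  qed
  have "cos th powr g = exp (g * ln (cos th))" using c1 by (simp add: powr_def)
  also have "\<dots> \<le> exp (ln (cos (g * th)))" using 1 by simp
  also have "\<dots> = cos (g * th)" using c2 by simp
  finally show ?thesis .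
qed

lemma Re_powr_ge:
  fixes z :: complex and g :: real
  assumes g: "0 < g" "g < 1" and z: "0 < Re z"
  shows "Re z powr g \<le> Re (z powr of_real g)"
proof -
  have z0: "z \<noteq> 0" using z by auto
  let ?t = "Im (Ln z)"
  have t: "\<bar>?t\<bar> < pi/2" using Re_Ln_pos_lt_imp z by blast
  have ez: "exp (Ln z) = z" using z0 by simp
  have "Re z = Re (exp (Ln z))" using ez by simp
  also have "\<dots> = exp (Re (Ln z)) * cos ?t" by (rule Re_exp)
  also have "\<dots> = exp (ln (norm z)) * cos ?t" by (subst Re_Ln[OF z0]) (rule refl)
  also have "\<dots> = norm z * cos ?t" using z0 by simp
  finally have "Re z = norm z * cos ?t" .
  moreover have "cos ?t \<ge> 0" using t by (intro cos_ge_zero) auto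
  ultimately have "Re z powr g = norm z powr g * cos ?t powr g"
    by (metis norm_ge_zero powr_mult)
  also have "\<dots> \<le> norm z powr g * cos (g * ?t)"
    by (intro mult_left_mono cos_pow_le g t) simp
  also have "\<dots> = Re (z powr of_real g)"
  proof -
    have "z powr of_real g = exp (of_real g * Ln z)" using z0 by (simp add: powr_def)
    then have "Re (z powr of_real g) = exp (g * ln (norm z)) * cos (g * ?t)"
      using z0 by (simp add: Re_exp)
    moreover have "norm z powr g = exp (g * ln (norm z))" using z0 by (simp add: powr_def)
    ultimately show ?thesis by simp
  qed
  finally show ?thesis .
qed


definition Phi :: "real \<Rightarrow> complex \<Rightarrow> complex" where
  "Phi g z = ((1 - z) * (3 - z) / 2) powr of_real g"

definition sfun :: "real \<Rightarrow> real" where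
  "sfun r = (1 - r) + (1 - r)^2 / 2"

definition fr :: "real \<Rightarrow> real \<Rightarrow> real" where
  "fr g = (\<lambda>z. ((1 - z) + (1 - z) ^ 2 / 2) powr g)"

lemma base_Re_ge:
  fixes w :: complex
  assumes "norm w < 1"
  shows "sfun (norm w) \<le> Re ((1 - w) * (3 - w) / 2)"
proof -
  define a where "a = Re w"
  define b where "b = Im w"
  define r where "r = norm w"
  have r2: "r^2 = a^2 + b^2" unfolding r_def a_def b_def by (simp add: cmod_power2)
  have ar: "a \<le> r" unfolding a_def r_def by (rule complex_Re_le_cmod)
  have r1: "r < 1" using assms r_def by simp
  have "Re ((1 - w) * (3 - w) / 2) = (3 - 4*a + a^2 - b^2)/2"
    unfolding a_def b_def by (simp add: algebra_simps power2_eq_square)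
  moreover have "0 \<le> (r - a) * (2 - r - a)" using ar r1 by (intro mult_nonneg_nonneg) auto
  moreover have "(r - a) * (2 - r - a) = 2*r - r^2 - 2*a + a^2"
    by (simp add: algebra_simps power2_eq_square)
  moreover have "sfun r = (3 - 4*r + r^2)/2" unfolding sfun_def by (simp add: power2_eq_square field_simps)
  ultimately have "(3 - 4*r + r^2) \<le> (3 - 4*a + a^2 - b^2)" using r2 by linarith
  then have "(3 - 4*r + r^2)/2 \<le> (3 - 4*a + a^2 - b^2)/2" by (rule divide_right_mono) simp
  then show ?thesis unfolding r_def[symmetric] using \<open>sfun r = _\<close> \<open>Re _ = _\<close> by linarith
qed

lemma sfun_pos: "0 \<le> r \<Longrightarrow> r < 1 \<Longrightarrow> 0 < sfun r"
  unfolding sfun_def by (simp add: add_pos_nonneg)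

lemma sfun_nonneg: "r \<le> 1 \<Longrightarrow> 0 \<le> sfun r"
  unfolding sfun_def by simp

lemma sfun_antimono: "0 \<le> r \<Longrightarrow> r \<le> q \<Longrightarrow> q \<le> 1 \<Longrightarrow> sfun q \<le> sfun r"
proof -
  assume a: "0 \<le> r" "r \<le> q" "q \<le> 1"
  have "sfun r - sfun q = (q - r) * (4 - q - r) / 2"
    unfolding sfun_def by (simp add: field_simps power2_eq_square)
  moreover have "0 \<le> (q - r) * (4 - q - r)" using a by (intro mult_nonneg_nonneg) auto
  ultimately show ?thesis by simp
qed

lemma Re_pos_notin: "0 < Re (z::complex) \<Longrightarrow> z \<notin> \<real>\<^sub>\<le>\<^sub>0"
  by (auto simp: nonpos_Reals_def)

lemma Phi_holo: "Phi g holomorphic_on ball 0 1"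
proof -
  have "(\<lambda>z. ((1 - z) * (3 - z) / 2) powr of_real g) holomorphic_on ball 0 1"
  proof (rule holomorphic_on_powr)
    fix z :: complex assume "z \<in> ball 0 1"
    then have "norm z < 1" by simp
    then have "0 < Re ((1 - z) * (3 - z) / 2)"
      using base_Re_ge[of z] sfun_pos[of "norm z"] by simp
    then show "(1 - z) * (3 - z) / 2 \<notin> \<real>\<^sub>\<le>\<^sub>0"
      by (rule Re_pos_notin)
  qed (auto intro!: holomorphic_intros)
  then show ?thesis unfolding Phi_def by simp
qed

lemma Phi_Re_ge:
  assumes g: "0 < g" "g < 1" and w: "norm w < 1"
  shows "sfun (norm w) powr g \<le> Re (Phi g w)"
proof -
  have s: "0 < sfun (norm w)" using sfun_pos[of "norm w"] w by simp
  have b: "sfun (norm w) \<le> Re ((1 - w) * (3 - w) / 2)" by (rule base_Re_ge[OF w])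
  have "sfun (norm w) powr g \<le> Re ((1 - w) * (3 - w) / 2) powr g"
    using s b g by (intro powr_mono2) auto
  also have "\<dots> \<le> Re (Phi g w)" unfolding Phi_def
    using s b by (intro Re_powr_ge g) auto
  finally show ?thesis .
qed

lemma Phi_real:
  assumes "x \<in> {-1<..<1}"
  shows "Phi g (of_real x) = of_real (fr g x)"
proof -
  have "(1 - of_real x) * (3 - of_real x) / 2 = (of_real ((1 - x) + (1 - x)^2/2) :: complex)"
    by (simp add: field_simps power2_eq_square)
  moreover have "0 \<le> (1 - x) + (1 - x)^2/2" using assms by auto
  ultimately show ?thesis unfolding Phi_def fr_def by (simp only: powr_of_real)
qed

lemma Phi_deriv_real:
  "\<forall>x\<in>{-1<..<1}. (deriv ^^ k) (Phi g) (of_real x) = of_real ((deriv ^^ k) (fr g) x)"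
proof (induction k)
  case 0
  then show ?case using Phi_real by simp
next
  case (Suc k)
  show ?case
  proof
    fix x :: real assume x: "x \<in> {-1<..<1}"
    define H where "H = (deriv ^^ k) (Phi g)"
    define h where "h = (deriv ^^ k) (fr g)"
    have Hh: "H holomorphic_on ball 0 1" unfolding H_def
      by (intro holomorphic_higher_deriv Phi_holo) auto
    have xin: "of_real x \<in> ball (0::complex) 1" using x by auto
    have d1: "(H has_field_derivative deriv H (of_real x)) (at (of_real x))"
      by (rule holomorphic_derivI[OF Hh _ xin]) auto
    have d2: "((\<lambda>y. H (of_real y)) has_vector_derivative deriv H (of_real x)) (at x)"
      by (rule has_vector_derivative_real_field[OF d1])
    have d3: "((\<lambda>y. complex_of_real (h y)) has_vector_derivative deriv H (of_real x)) (at x)"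
      by (rule has_vector_derivative_transform_within_open[OF d2, of "{-1<..<1}"])
         (use x Suc.IH in \<open>auto simp: H_def h_def\<close>)
    have dre: "(h has_real_derivative Re (deriv H (of_real x))) (at x)"
      using has_field_derivative_Re[OF d3] by simp
    have dim: "((\<lambda>y. 0::real) has_real_derivative Im (deriv H (of_real x))) (at x)"
      using has_field_derivative_Im[OF d3] by simp
    have "Im (deriv H (of_real x)) = 0"
      using DERIV_unique[OF dim DERIV_const] by simp
    then have e: "deriv H (of_real x) = of_real (Re (deriv H (of_real x)))"
      by (simp add: complex_eq_iff)
    have "deriv h x = Re (deriv H (of_real x))" using dre by (rule DERIV_imp_deriv)
    then show "(deriv ^^ Suc k) (Phi g) (of_real x) = of_real ((deriv ^^ Suc k) (fr g) x)"
      using e by (simp add: H_def h_def)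
  qed
qed

lemma l2_coef_Phi:
  "complex_of_real (l2_coef g k) = (deriv ^^ k) (Phi g) 0 / fact k"
proof -
  have "(deriv ^^ k) (Phi g) (of_real 0) = of_real ((deriv ^^ k) (fr g) 0)"
    using bspec[OF Phi_deriv_real[of k g], of 0] by simp
  then show ?thesis unfolding l2_coef_def fr_def by simp
qed

lemma Phi_series:
  assumes "norm w < 1"
  shows "(\<lambda>k. complex_of_real (l2_coef g k) * w ^ k) sums Phi g w"
  using holomorphic_power_series[OF Phi_holo[of g], of w] assms
  by (simp add: l2_coef_Phi)

lemma Phi_abs_summable:
  assumes "norm w < 1"
  shows "summable (\<lambda>k. norm (complex_of_real (l2_coef g k) * w ^ k))"
proof -
  define r where "r = (1 + norm w) / 2"
  have r: "norm w < r" "r < 1" using assms unfolding r_def by auto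
  have "summable (\<lambda>k. complex_of_real (l2_coef g k) * (of_real r) ^ k)"
    using Phi_series[of "of_real r" g] r norm_ge_zero[of w] by (auto simp: sums_iff)
  then have "conv_radius (\<lambda>k. complex_of_real (l2_coef g k)) \<ge> norm (of_real r :: complex)"
    by (rule conv_radius_geI)
  moreover have "ereal (norm w) < ereal (norm (of_real r :: complex))" using r norm_ge_zero[of w] by simp
  ultimately have "norm w < conv_radius (\<lambda>k. complex_of_real (l2_coef g k))"
    by (meson order_less_le_trans)
  then show ?thesis by (rule abs_summable_in_conv_radius)
qed


definition omg :: "nat \<Rightarrow> complex" where
  "omg L = exp (2 * of_real pi * \<i> / of_nat L)"

lemma omg_pow: "omg L ^ e = exp (2 * of_real pi * \<i> * of_nat e / of_nat L)"
  unfolding omg_def by (simp flip: exp_of_nat_mult add: field_simps)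

lemma omg_L: "L > 0 \<Longrightarrow> omg L ^ L = 1"
  unfolding omg_pow by (simp add: exp_eq_1)

lemma omg_pow_eq_1: "L > 0 \<Longrightarrow> omg L ^ e = 1 \<longleftrightarrow> L dvd e"
proof
  assume L: "L > 0" and e: "omg L ^ e = 1"
  then obtain n :: int where n: "2 * pi * real e / real L = of_int (2 * n) * pi"
    unfolding omg_pow exp_eq_1 by auto
  then have "real e = of_int n * real L" using L by (simp add: field_simps)
  then have "int e = n * int L" by (metis of_int_eq_iff of_int_mult of_int_of_nat_eq)
  then have "int L dvd int e" by simp
  then show "L dvd e" by simp
next
  assume L: "L > 0" and "L dvd e"
  then obtain c where "e = L * c" by auto
  then show "omg L ^ e = 1" using omg_L[OF L] by (simp add: power_mult)
qed

lemma omg_sum: "L > 0 \<Longrightarrow> (\<Sum>j<L. (omg L ^ e) ^ j) = (if L dvd e then of_nat L else 0)"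
proof -
  assume L: "L > 0"
  show ?thesis
  proof (cases "L dvd e")
    case True
    then have "omg L ^ e = 1" using omg_pow_eq_1[OF L] by simp
    then show ?thesis using True by simp
  next
    case False
    then have ne: "omg L ^ e \<noteq> 1" using omg_pow_eq_1[OF L] by simp
    have "(omg L ^ e) ^ L = 1" using omg_L[OF L]
      by (metis power_mult mult.commute power_one)
    then show ?thesis using False ne by (simp add: sum_gp_strict)
  qed
qed

lemma norm_omg_pow: "norm (omg L ^ j) = 1"
  unfolding omg_pow by (simp add: norm_exp_eq_Re)

lemma cnj_pow_root:
  assumes L: "L > 0" and n: "n \<le> L"
  shows "cnj (omg L ^ j) ^ n = (omg L ^ j) ^ (L - n)"
proof -
  define z where "z = omg L ^ j"
  have nz: "norm z = 1" unfolding z_def by (rule norm_omg_pow)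
  have zL: "z ^ L = 1" unfolding z_def using omg_L[OF L]
    by (metis power_mult mult.commute power_one)
  have zc: "cnj z * z = 1" using complex_norm_square[of z] nz by (simp add: mult.commute)
  have z0: "z \<noteq> 0" using nz by auto
  have "cnj z ^ n * z ^ n = 1" using zc by (simp flip: power_mult_distrib)
  moreover have "z ^ (L - n) * z ^ n = 1" using zL n by (simp flip: power_add)
  ultimately have "cnj z ^ n * z ^ n = z ^ (L - n) * z ^ n" by simp
  then show ?thesis unfolding z_def[symmetric] using z0 by simp
qed

lemma dvd_iff_eq:
  fixes k m n K N L :: nat
  assumes "k < K" "1 \<le> m" "m \<le> N" "1 \<le> n" "n \<le> N" "L = K + N"
  shows "L dvd (k + (m + (L - n))) \<longleftrightarrow> k + m = n"
proof
  assume d: "L dvd (k + (m + (L - n)))"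
  have lo: "k + (m + (L - n)) > 0" using assms by auto
  have hi: "k + (m + (L - n)) < 2 * L" using assms by auto
  from d obtain c where c: "k + (m + (L - n)) = L * c" by auto
  have "c \<noteq> 0" using c lo by auto
  moreover have "c < 2" using c hi by (metis mult.commute mult_less_cancel2)
  ultimately have "c = 1" by auto
  then show "k + m = n" using c assms by auto
next
  assume "k + m = n"
  then have "k + (m + (L - n)) = L" using assms by auto
  then show "L dvd (k + (m + (L - n)))" by simp
qed

lemma dft_identity:
  fixes b x :: "nat \<Rightarrow> complex" and K N L :: nat
  assumes KN: "N \<le> K" and L: "L = K + N" and N1: "1 \<le> N"
  shows "(\<Sum>j<L. (\<Sum>k<K. b k * (omg L ^ j) ^ k) *
            ((\<Sum>m=1..N. x m * (omg L ^ j) ^ m) * cnj (\<Sum>m=1..N. x m * (omg L ^ j) ^ m)))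
         = of_nat L * (\<Sum>n=1..N. \<Sum>m=1..n. cnj (x n) * b (n - m) * x m)"
proof -
  have L0: "L > 0" using L N1 by simp
  define e where "e = (\<lambda>n m k. k + (m + (L - n)))"
  define G where "G = (\<lambda>j n m k. cnj (x n) * x m * b k * (omg L ^ e n m k) ^ j)"
  have step1: "(\<Sum>k<K. b k * (omg L ^ j) ^ k) *
            ((\<Sum>m=1..N. x m * (omg L ^ j) ^ m) * cnj (\<Sum>m=1..N. x m * (omg L ^ j) ^ m))
        = (\<Sum>n=1..N. \<Sum>m=1..N. \<Sum>k<K. G j n m k)" for j
  proof -
    have c: "cnj (\<Sum>m=1..N. x m * (omg L ^ j) ^ m) = (\<Sum>n=1..N. cnj (x n) * (omg L ^ j) ^ (L - n))"
      unfolding cnj_sum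
    proof (rule sum.cong[OF refl])
      fix n assume n: "n \<in> {1..N}"
      have "cnj ((omg L ^ j) ^ n) = cnj (omg L ^ j) ^ n" by (rule complex_cnj_power)
      also have "\<dots> = (omg L ^ j) ^ (L - n)" using n L by (intro cnj_pow_root[OF L0]) auto
      finally show "cnj (x n * (omg L ^ j) ^ n) = cnj (x n) * (omg L ^ j) ^ (L - n)"
        by (simp only: complex_cnj_mult)
    qed
    have "(\<Sum>k<K. b k * (omg L ^ j) ^ k) *
            ((\<Sum>m=1..N. x m * (omg L ^ j) ^ m) * cnj (\<Sum>m=1..N. x m * (omg L ^ j) ^ m))
        = (\<Sum>n=1..N. cnj (x n) * (omg L ^ j) ^ (L - n)) *
            ((\<Sum>m=1..N. x m * (omg L ^ j) ^ m) * (\<Sum>k<K. b k * (omg L ^ j) ^ k))"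
      unfolding c by (simp add: mult_ac)
    also have "\<dots> = (\<Sum>n=1..N. \<Sum>m=1..N. \<Sum>k<K.
        cnj (x n) * (omg L ^ j) ^ (L - n) * (x m * (omg L ^ j) ^ m * (b k * (omg L ^ j) ^ k)))"
      by (simp only: sum_distrib_right) (simp only: sum_distrib_left)
    also have "\<dots> = (\<Sum>n=1..N. \<Sum>m=1..N. \<Sum>k<K. G j n m k)"
    proof (intro sum.cong refl)
      fix n m k
      have "(omg L ^ j) ^ (L - n) * ((omg L ^ j) ^ m * (omg L ^ j) ^ k) = (omg L ^ e n m k) ^ j"
        unfolding e_def by (simp add: power_add[symmetric] power_mult[symmetric] mult.commute add_ac add_mult_distrib2)
      then show "cnj (x n) * (omg L ^ j) ^ (L - n) * (x m * (omg L ^ j) ^ m * (b k * (omg L ^ j) ^ k))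
          = G j n m k" unfolding G_def by (simp add: mult_ac)
    qed
    finally show ?thesis .
  qed
  have "(\<Sum>j<L. \<Sum>n=1..N. \<Sum>m=1..N. \<Sum>k<K. G j n m k)
      = (\<Sum>n=1..N. \<Sum>m=1..N. \<Sum>k<K. \<Sum>j<L. G j n m k)"
  proof -
    have "(\<Sum>j<L. \<Sum>n=1..N. \<Sum>m=1..N. \<Sum>k<K. G j n m k)
        = (\<Sum>n=1..N. \<Sum>j<L. \<Sum>m=1..N. \<Sum>k<K. G j n m k)" by (rule sum.swap)
    also have "\<dots> = (\<Sum>n=1..N. \<Sum>m=1..N. \<Sum>j<L. \<Sum>k<K. G j n m k)"
      by (rule sum.cong[OF refl], rule sum.swap)
    also have "\<dots> = (\<Sum>n=1..N. \<Sum>m=1..N. \<Sum>k<K. \<Sum>j<L. G j n m k)"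
      by (rule sum.cong[OF refl], rule sum.cong[OF refl], rule sum.swap)
    finally show ?thesis .
  qed
  also have "\<dots> = (\<Sum>n=1..N. \<Sum>m=1..N. \<Sum>k<K.
       (if k = n - m \<and> m \<le> n then of_nat L * (cnj (x n) * b (n - m) * x m) else 0))"
  proof (intro sum.cong refl)
    fix n m k assume n: "n \<in> {1..N}" and m: "m \<in> {1..N}" and k: "k \<in> {..<K}"
    have "(\<Sum>j<L. G j n m k) = cnj (x n) * x m * b k * (\<Sum>j<L. (omg L ^ e n m k) ^ j)"
      unfolding G_def by (simp add: sum_distrib_left)
    also have "\<dots> = cnj (x n) * x m * b k * (if k + m = n then of_nat L else 0)"
      using omg_sum[OF L0, of "e n m k"] dvd_iff_eq[of k K m N n L] n m k L
      unfolding e_def by auto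
    also have "\<dots> = (if k = n - m \<and> m \<le> n then of_nat L * (cnj (x n) * b (n - m) * x m) else 0)"
      by (auto simp: mult_ac)
    finally show "(\<Sum>j<L. G j n m k) = \<dots>" .
  qed
  also have "\<dots> = (\<Sum>n=1..N. \<Sum>m=1..N. (if m \<le> n then of_nat L * (cnj (x n) * b (n - m) * x m) else 0))"
  proof (intro sum.cong refl)
    fix n m assume n: "n \<in> {1..N}" and m: "m \<in> {1..N}"
    show "(\<Sum>k<K. (if k = n - m \<and> m \<le> n then of_nat L * (cnj (x n) * b (n - m) * x m) else 0))
        = (if m \<le> n then of_nat L * (cnj (x n) * b (n - m) * x m) else 0)"
    proof (cases "m \<le> n")
      case True
      have "n - m < K" using n m KN by auto
      then show ?thesis using True by (simp add: sum.delta)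
    qed simp
  qed
  also have "\<dots> = (\<Sum>n=1..N. \<Sum>m=1..n. of_nat L * (cnj (x n) * b (n - m) * x m))"
  proof (rule sum.cong[OF refl])
    fix n assume n: "n \<in> {1..N}"
    have "{m \<in> {1..N}. m \<le> n} = {1..n}" using n by auto
    then show "(\<Sum>m=1..N. (if m \<le> n then of_nat L * (cnj (x n) * b (n - m) * x m) else 0))
        = (\<Sum>m=1..n. of_nat L * (cnj (x n) * b (n - m) * x m))"
      by (simp add: sum.inter_filter[symmetric])
  qed
  also have "\<dots> = of_nat L * (\<Sum>n=1..N. \<Sum>m=1..n. cnj (x n) * b (n - m) * x m)"
    by (simp add: sum_distrib_left)
  finally have "(\<Sum>j<L. \<Sum>n=1..N. \<Sum>m=1..N. \<Sum>k<K. G j n m k) = of_nat L * (\<Sum>n=1..N. \<Sum>m=1..n. cnj (x n) * b (n - m) * x m)" .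
  then show ?thesis using step1 by simp
qed


lemma tail_bound:
  fixes b :: "nat \<Rightarrow> complex" and z :: complex
  assumes summ: "summable (\<lambda>k. norm (b k))" and z: "norm z = 1"
    and pos: "0 \<le> Re (\<Sum>k. b k * z ^ k)"
  shows "- (\<Sum>i. norm (b (i + K))) \<le> Re (\<Sum>k<K. b k * z ^ k)"
proof -
  have nb: "norm (b k * z ^ k) = norm (b k)" for k using z by (simp add: norm_mult norm_power)
  have s1: "summable (\<lambda>k. norm (b k * z ^ k))" using summ by (simp add: nb)
  have s2: "summable (\<lambda>k. b k * z ^ k)" using s1 by (rule summable_norm_cancel)
  have split: "(\<Sum>k. b k * z ^ k) = (\<Sum>i. b (i + K) * z ^ (i + K)) + (\<Sum>k<K. b k * z ^ k)"
    using suminf_split_initial_segment[OF s2, of K] .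
  have s3: "summable (\<lambda>i. norm (b (i + K) * z ^ (i + K)))"
    using summable_ignore_initial_segment[OF s1, of K] .
  have "norm (\<Sum>i. b (i + K) * z ^ (i + K)) \<le> (\<Sum>i. norm (b (i + K) * z ^ (i + K)))"
    by (rule summable_norm[OF s3])
  also have "\<dots> = (\<Sum>i. norm (b (i + K)))" by (simp add: nb)
  finally have t: "norm (\<Sum>i. b (i + K) * z ^ (i + K)) \<le> (\<Sum>i. norm (b (i + K)))" .
  define T where "T = (\<Sum>i. b (i + K) * z ^ (i + K))"
  define P where "P = (\<Sum>k<K. b k * z ^ k)"
  have "Re T \<le> norm T" by (rule complex_Re_le_cmod)
  moreover have "0 \<le> Re T + Re P" using pos split unfolding T_def[symmetric] P_def[symmetric] by simp
  ultimately show ?thesis using t unfolding T_def[symmetric] P_def[symmetric] by linarith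
qed

lemma toeplitz_pos_gen:
  fixes b x :: "nat \<Rightarrow> complex" and N :: nat
  assumes summ: "summable (\<lambda>k. norm (b k))"
    and pos: "\<And>z. norm z = 1 \<Longrightarrow> 0 \<le> Re (\<Sum>k. b k * z ^ k)"
  shows "0 \<le> Re (\<Sum>n=1..N. \<Sum>m=1..n. cnj (x n) * b (n - m) * x m)"
proof (cases "N = 0")
  case True
  then show ?thesis by simp
next
  case False
  then have N1: "1 \<le> N" by simp
  define Q where "Q = (\<Sum>n=1..N. \<Sum>m=1..n. cnj (x n) * b (n - m) * x m)"
  define S where "S = (\<Sum>m=1..N. norm (x m))"
  define tl where "tl = (\<lambda>K. \<Sum>i. norm (b (i + K)))"
  have tl0: "0 \<le> tl K" for K unfolding tl_def
    by (intro suminf_nonneg summable_ignore_initial_segment[OF summ]) simp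
  have S0: "0 \<le> S" unfolding S_def by (simp add: sum_nonneg)
  have claim: "- tl K * S^2 \<le> Re Q" if KN: "N \<le> K" for K
  proof -
    define L where "L = K + N"
    have L0: "L > 0" using N1 L_def by simp
    define P where "P = (\<lambda>j. \<Sum>k<K. b k * (omg L ^ j) ^ k)"
    define X where "X = (\<lambda>j. \<Sum>m=1..N. x m * (omg L ^ j) ^ m)"
    have id: "(\<Sum>j<L. P j * (X j * cnj (X j))) = of_nat L * Q"
      unfolding P_def X_def Q_def by (rule dft_identity[OF KN L_def N1])
    have XX: "X j * cnj (X j) = of_real ((norm (X j))^2)" for j
      by (rule complex_norm_square[symmetric])
    have XS: "norm (X j) \<le> S" for j
    proof -
      have "norm (X j) \<le> (\<Sum>m=1..N. norm (x m * (omg L ^ j) ^ m))" unfolding X_def by (rule norm_sum)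
      also have "\<dots> = S" unfolding S_def
        using norm_omg_pow[of L 1] by (simp add: norm_mult norm_power)
      finally show ?thesis .
    qed
    have PR: "- tl K \<le> Re (P j)" for j
      unfolding P_def tl_def
      by (rule tail_bound[OF summ norm_omg_pow pos[OF norm_omg_pow]])
    have trm: "- tl K * S^2 \<le> Re (P j * (X j * cnj (X j)))" for j
    proof -
      have "Re (P j * (X j * cnj (X j))) = Re (P j) * (norm (X j))^2" unfolding XX by simp
      moreover have "- tl K * (norm (X j))^2 \<le> Re (P j) * (norm (X j))^2"
        using PR[of j] by (intro mult_right_mono) auto
      moreover have "- tl K * S^2 \<le> - tl K * (norm (X j))^2"
        using XS[of j] tl0[of K] by (intro mult_left_mono_neg power_mono) auto
      ultimately show ?thesis by linarith
    qed
    have "(\<Sum>j<L. - tl K * S^2) \<le> (\<Sum>j<L. Re (P j * (X j * cnj (X j))))"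
      by (intro sum_mono trm)
    also have "\<dots> = Re (of_nat L * Q)" unfolding id[symmetric] by simp
    also have "\<dots> = real L * Re Q" by simp
    finally have "real L * (- tl K * S^2) \<le> real L * Re Q" by simp
    moreover have "real L > 0" using L0 by simp
    ultimately show ?thesis using mult_le_cancel_left_pos by blast
  qed
  show ?thesis
  proof (rule ccontr)
    assume neg: "\<not> 0 \<le> Re (\<Sum>n=1..N. \<Sum>m=1..n. cnj (x n) * b (n - m) * x m)"
    then have Qn: "Re Q < 0" unfolding Q_def by simp
    define eps where "eps = - Re Q / (S^2 + 1)"
    have S1: "0 < S^2 + 1" by (simp add: add_nonneg_pos)
    have eps: "0 < eps" unfolding eps_def using Qn S1 by (simp add: divide_neg_pos)
    obtain K0 where K0: "\<forall>n\<ge>K0. norm (\<Sum>i. norm (b (i + n))) < eps"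
      using suminf_exist_split[OF eps summ] by auto
    define K where "K = max K0 N"
    have "tl K < eps" using K0[rule_format, of K] tl0[of K] unfolding K_def tl_def by auto
    then have "- eps * S^2 \<le> - tl K * S^2" by (intro mult_right_mono) auto
    also have "\<dots> \<le> Re Q" using claim[of K] K_def by simp
    finally have 1: "- eps * S^2 \<le> Re Q" .
    have "- eps * S^2 = Re Q * S^2 / (S^2 + 1)" unfolding eps_def by (simp add: field_simps)
    moreover have "Re Q < Re Q * S^2 / (S^2 + 1)"
    proof -
      have "Re Q * (S^2 + 1) < Re Q * S^2" using Qn by (simp add: algebra_simps)
      then show ?thesis by (simp add: field_simps add_pos_nonneg)
    qed
    ultimately show False using 1 by linarith
  qed
qed


lemma time_pos_r:
  fixes g q r :: real and z0 :: complex and x :: "nat \<Rightarrow> complex"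
    and a :: "nat \<Rightarrow> complex"
  assumes g: "0 < g" "g < 1" and q: "0 < q" "q \<le> 1" and z0: "norm z0 \<le> q"
    and r: "0 < r" "r < 1"
    and a: "\<And>k. a k = (if k = 0 then of_real (l2_coef g 0 - sfun q powr g)
                        else of_real (l2_coef g k) * z0 ^ k)"
  shows "0 \<le> Re (\<Sum>n=1..N. \<Sum>m=1..n. cnj (x n) * (a (n - m) * of_real r ^ (n - m)) * x m)"
proof -
  define c where "c = (\<lambda>k. complex_of_real (l2_coef g k))"
  define w0 where "w0 = z0 * of_real r"
  define sg where "sg = complex_of_real (sfun q powr g)"
  define d where "d = (\<lambda>k::nat. if k = 0 then sg else 0)"
  define b where "b = (\<lambda>k. a k * of_real r ^ k)"
  have nw0: "norm w0 \<le> q * r" unfolding w0_def using z0 r by (simp add: norm_mult mult_right_mono)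
  have nw1: "norm w0 < 1"
  proof -
    have "q * r < 1" using q r by (smt (verit) mult_le_one mult_strict_left_mono)
    then show ?thesis using nw0 by simp
  qed
  have bdef: "b k = c k * w0 ^ k - d k" for k
    unfolding b_def a c_def w0_def d_def sg_def by (simp add: power_mult_distrib)
  have s1: "summable (\<lambda>k. norm (c k * w0 ^ k))" unfolding c_def by (rule Phi_abs_summable[OF nw1])
  have s2: "summable (\<lambda>k. norm (d k))"
  proof -
    have "(\<lambda>k. norm (d k)) = (\<lambda>k. if k = 0 then norm sg else 0)" unfolding d_def by auto
    then show ?thesis using sums_single[of 0 "\<lambda>_. norm sg"] by (auto simp: sums_iff)
  qed
  have summ: "summable (\<lambda>k. norm (b k))"
  proof (rule summable_comparison_test'[of "\<lambda>k. norm (c k * w0 ^ k) + norm (d k)" 0])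
    show "summable (\<lambda>k. norm (c k * w0 ^ k) + norm (d k))" by (rule summable_add[OF s1 s2])
    fix n show "norm (norm (b n)) \<le> norm (c n * w0 ^ n) + norm (d n)"
      unfolding bdef by (simp add: norm_triangle_ineq4)
  qed
  have pos: "0 \<le> Re (\<Sum>k. b k * z ^ k)" if z: "norm z = 1" for z
  proof -
    have nwz: "norm (w0 * z) < 1" using nw1 z by (simp add: norm_mult)
    have e1: "(\<lambda>k. c k * (w0 * z) ^ k) sums Phi g (w0 * z)" unfolding c_def by (rule Phi_series[OF nwz])
    have e2: "(\<lambda>k. d k * z ^ k) sums sg"
    proof -
      have "(\<lambda>k. d k * z ^ k) = (\<lambda>k. if k = 0 then sg else 0)" unfolding d_def by auto
      then show ?thesis using sums_single[of 0 "\<lambda>_. sg"] by simp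
    qed
    have "(\<lambda>k. b k * z ^ k) sums (Phi g (w0 * z) - sg)"
    proof -
      have "(\<lambda>k. c k * (w0 * z) ^ k - d k * z ^ k) sums (Phi g (w0 * z) - sg)"
        by (rule sums_diff[OF e1 e2])
      moreover have "(\<lambda>k. c k * (w0 * z) ^ k - d k * z ^ k) = (\<lambda>k. b k * z ^ k)"
        by (auto simp: bdef power_mult_distrib algebra_simps)
      ultimately show ?thesis by simp
    qed
    then have eq: "(\<Sum>k. b k * z ^ k) = Phi g (w0 * z) - sg" by (simp add: sums_iff)
    have "sfun (norm (w0 * z)) powr g \<le> Re (Phi g (w0 * z))" by (rule Phi_Re_ge[OF g nwz])
    moreover have "sfun q powr g \<le> sfun (norm (w0 * z)) powr g"
    proof -
      have "q * r \<le> q" using q r by (intro mult_left_le) auto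
      then have nn: "norm (w0 * z) \<le> q" using nw0 z by (simp add: norm_mult)
      have "sfun q \<le> sfun (norm (w0 * z))" using nn q by (intro sfun_antimono) auto
      moreover have "0 \<le> sfun q" using q by (intro sfun_nonneg) auto
      ultimately show ?thesis using g by (intro powr_mono2) auto
    qed
    ultimately show ?thesis unfolding eq sg_def by simp
  qed
  have "0 \<le> Re (\<Sum>n=1..N. \<Sum>m=1..n. cnj (x n) * b (n - m) * x m)"
    by (rule toeplitz_pos_gen[OF summ pos])
  then show ?thesis unfolding b_def .
qed

lemma time_pos:
  fixes g q :: real and z0 :: complex and x :: "nat \<Rightarrow> complex"
    and a :: "nat \<Rightarrow> complex"
  assumes g: "0 < g" "g < 1" and q: "0 < q" "q \<le> 1" and z0: "norm z0 \<le> q"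
    and a: "\<And>k. a k = (if k = 0 then of_real (l2_coef g 0 - sfun q powr g)
                        else of_real (l2_coef g k) * z0 ^ k)"
    and x0: "x 0 = 0"
  shows "0 \<le> Re (\<Sum>n=1..N. cnj (x n) * (\<Sum>k=0..n. a k * x (n - k)))"
proof -
  define F where "F = (\<lambda>r::real. Re (\<Sum>n=1..N. \<Sum>m=1..n. cnj (x n) * (a (n - m) * of_real r ^ (n - m)) * x m))"
  have cont: "continuous_on UNIV F" unfolding F_def by (intro continuous_intros)
  have lim: "(F \<longlongrightarrow> F 1) (at_left 1)"
  proof -
    have "(F \<longlongrightarrow> F 1) (at 1)" using cont by (simp add: continuous_on_def)
    then show ?thesis by (rule tendsto_mono[OF at_le[OF subset_UNIV]])
  qed
  have ev: "eventually (\<lambda>r. 0 \<le> F r) (at_left (1::real))"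
  proof -
    have "eventually (\<lambda>r. r \<in> {0<..<1}) (at_left (1::real))" by (rule eventually_at_left_real) simp
    then show ?thesis
      by eventually_elim (unfold F_def, rule time_pos_r[OF g q z0 _ _ a], auto)
  qed
  have F1: "0 \<le> F 1" by (rule tendsto_lowerbound[OF lim ev]) simp
  have inner: "(\<Sum>k=0..n. a k * x (n - k)) = (\<Sum>m=1..n. a (n - m) * x m)" if "n \<ge> 1" for n
  proof -
    have "(\<Sum>k=0..n. a k * x (n - k)) = (\<Sum>m=0..n. a (n - m) * x m)"
      by (rule sum.reindex_bij_witness[where i="\<lambda>m. n - m" and j="\<lambda>k. n - k"]) auto
    also have "\<dots> = (\<Sum>m=1..n. a (n - m) * x m)"
      using x0 by (simp add: sum.atLeast_Suc_atMost)
    finally show ?thesis .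
  qed
  have "(\<Sum>n=1..N. cnj (x n) * (\<Sum>k=0..n. a k * x (n - k)))
      = (\<Sum>n=1..N. \<Sum>m=1..n. cnj (x n) * (a (n - m) * of_real 1 ^ (n - m)) * x m)"
    by (intro sum.cong refl) (auto simp: inner sum_distrib_left mult_ac)
  then show ?thesis using F1 unfolding F_def by simp
qed


lemma g_coef_poch: "g_coef a k = pochhammer (- a) k / fact k"
  unfolding g_coef_def gbinomial_pochhammer by (simp flip: power_mult_distrib)

lemma g_coef_sum: "(\<Sum>k=0..m. g_coef a k) = g_coef (a - 1) m"
proof (induction m)
  case 0
  then show ?case by (simp add: g_coef_def)
next
  case (Suc m)
  have "a gchoose Suc m = ((a - 1) gchoose m) + ((a - 1) gchoose Suc m)"
    using gbinomial_Suc_Suc[of "a - 1" m] by simp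
  then have "g_coef a (Suc m) = - g_coef (a - 1) m + g_coef (a - 1) (Suc m)"
    unfolding g_coef_def by (simp add: algebra_simps)
  then show ?case using Suc by simp
qed

lemma g_coef_nonneg:
  fixes al :: real
  assumes "1 < al" "al < 2" "2 \<le> k"
  shows "0 \<le> g_coef al k"
proof -
  obtain j where k: "k = Suc (Suc j)" using assms(3) by (metis add_2_eq_Suc le_Suc_ex)
  have "pochhammer (- al) k = (- al) * ((1 - al) * pochhammer (2 - al) j)"
    unfolding k pochhammer_rec by (simp add: algebra_simps)
  moreover have "0 < pochhammer (2 - al) j" using assms by (intro pochhammer_pos) simp
  moreover have "0 \<le> (- al) * (1 - al)" using assms by (intro mult_nonpos_nonpos) auto
  ultimately have "0 \<le> pochhammer (- al) k"
    by (metis mult.assoc mult_nonneg_nonneg less_imp_le)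
  then show ?thesis unfolding g_coef_poch by simp
qed

lemma G_neg:
  fixes al :: real
  assumes "1 < al" "al < 2" "1 \<le> m"
  shows "g_coef (al - 1) m < 0"
proof -
  obtain j where m: "m = Suc j" using assms(3) by (cases m) auto
  have "pochhammer (- (al - 1)) m = (1 - al) * pochhammer (2 - al) j"
    unfolding m pochhammer_rec by (simp add: algebra_simps)
  moreover have "0 < pochhammer (2 - al) j" using assms by (intro pochhammer_pos) simp
  ultimately have "pochhammer (- (al - 1)) m < 0" using assms by (simp add: mult_neg_pos)
  then show ?thesis unfolding g_coef_poch by (simp add: divide_neg_pos)
qed

lemma G_mono:
  fixes al :: real
  assumes "1 < al" "al < 2" "2 \<le> m"
  shows "g_coef (al - 1) (m - 1) \<le> g_coef (al - 1) m"
proof -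
  obtain j where m: "m = Suc j" and j: "1 \<le> j" using assms(3) by (cases m) auto
  have "g_coef (al - 1) m = g_coef (al - 1) j * ((1 - al + j) / (j + 1))"
    unfolding m g_coef_poch pochhammer_Suc by (simp add: field_simps)
  moreover have "g_coef (al - 1) j < 0" using G_neg assms j by simp
  moreover have "0 \<le> (1 - al + j) / (j + 1)" "(1 - al + j) / (j + 1) \<le> 1"
    using assms j by (auto simp: field_simps)
  ultimately have "0 \<le> g_coef (al - 1) j * ((1 - al + j) / (j + 1) - 1)"
    by (intro mult_nonpos_nonpos) auto
  then have "g_coef (al - 1) j \<le> g_coef (al - 1) j * ((1 - al + j) / (j + 1))"
    by (simp add: algebra_simps)
  then have "g_coef (al - 1) j \<le> g_coef (al - 1) m" using \<open>g_coef (al - 1) m = _\<close> by simp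
  then show ?thesis using m by simp
qed

lemma not_nonpos_int:
  fixes al :: real
  assumes "1 < al" "al < 2"
  shows "1 - al \<notin> \<int>\<^sub>\<le>\<^sub>0"
proof
  assume "1 - al \<in> \<int>\<^sub>\<le>\<^sub>0"
  then obtain n :: int where n: "1 - al = of_int n" by (auto elim!: nonpos_Ints_cases)
  then have "-1 < n" "n < 0" using assms by linarith+
  then show False by simp
qed

lemma Gamma_neg:
  fixes al :: real
  assumes "1 < al" "al < 2"
  shows "Gamma (1 - al) < 0"
proof -
  have "Gamma (1 - al + 1) = (1 - al) * Gamma (1 - al)"
    by (rule Gamma_plus1[OF not_nonpos_int[OF assms]])
  moreover have "0 < Gamma (1 - al + 1)" using assms by (intro Gamma_real_pos) simp
  ultimately have "0 < (1 - al) * Gamma (1 - al)" by simp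
  then show ?thesis using assms by (simp add: zero_less_mult_iff)
qed

lemma Gamma_ratio:
  fixes al :: real and m :: nat
  assumes "1 < al" "al < 2" "1 \<le> m"
  shows "fact m \<le> Gamma (real m + 1 - al) * (real m + 1) powr al"
proof -
  define th where "th = 1 / (1 + al)"
  have th: "0 \<le> th" "th \<le> 1" using assms unfolding th_def by auto
  have x1: "real m + 1 - al \<in> {0<..}" using assms by auto
  have x2: "real m + 2 \<in> {0<..}" by auto
  have "(ln \<circ> Gamma) ((1 - (1 - th)) *\<^sub>R (real m + 1 - al) + (1 - th) *\<^sub>R (real m + 2))
      \<le> (1 - (1 - th)) * (ln \<circ> Gamma) (real m + 1 - al) + (1 - th) * (ln \<circ> Gamma) (real m + 2)"
    using th by (intro convex_onD[OF log_convex_Gamma_real] x1 x2) auto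
  moreover have "(1 - (1 - th)) *\<^sub>R (real m + 1 - al) + (1 - th) *\<^sub>R (real m + 2) = real m + 1"
  proof -
    have t1: "th * (1 + al) = 1" unfolding th_def using assms by simp
    have "(1 - (1 - th)) *\<^sub>R (real m + 1 - al) + (1 - th) *\<^sub>R (real m + 2) = real m + 2 - th * (1 + al)"
      by (simp add: algebra_simps)
    then show ?thesis using t1 by simp
  qed
  ultimately have 1: "ln (Gamma (real m + 1)) \<le> th * ln (Gamma (real m + 1 - al)) + (1 - th) * ln (Gamma (real m + 2))"
    by simp
  have gf: "Gamma (real m + 1) = fact m" using Gamma_fact[of m] by (simp add: add.commute)
  have g2: "Gamma (real m + 2) = (real m + 1) * fact m"
  proof -
    have "Gamma (real m + 1 + 1) = (real m + 1) * Gamma (real m + 1)"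
      by (rule Gamma_plus1) (metis of_nat_Suc of_nat_in_nonpos_Ints_iff nat.distinct(1) add.commute)
    then show ?thesis using gf by (simp add: add.assoc)
  qed
  have fpos: "0 < (fact m :: real)" by simp
  have Gp: "0 < Gamma (real m + 1 - al)" using assms by (intro Gamma_real_pos) simp
  have "ln (Gamma (real m + 2)) = ln (real m + 1) + ln (fact m)" unfolding g2 using fpos by (simp add: ln_mult)
  then have "ln (fact m) \<le> th * ln (Gamma (real m + 1 - al)) + (1 - th) * (ln (real m + 1) + ln (fact m))"
    using 1 gf by simp
  then have "th * ln (fact m) \<le> th * ln (Gamma (real m + 1 - al)) + (1 - th) * ln (real m + 1)"
    by (simp add: algebra_simps)
  moreover have "1 - th = th * al" unfolding th_def using assms by (simp add: field_simps)
  ultimately have "th * ln (fact m) \<le> th * (ln (Gamma (real m + 1 - al)) + al * ln (real m + 1))"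
    by (simp add: algebra_simps)
  moreover have "0 < th" unfolding th_def using assms by simp
  ultimately have "ln (fact m) \<le> ln (Gamma (real m + 1 - al)) + al * ln (real m + 1)"
    using mult_le_cancel_left_pos by blast
  also have "\<dots> = ln (Gamma (real m + 1 - al) * (real m + 1) powr al)"
    using Gp by (simp add: ln_mult ln_powr)
  finally show ?thesis using fpos Gp by (simp add: ln_le_cancel_iff)
qed

lemma G_bound:
  fixes al :: real and m :: nat
  assumes "1 < al" "al < 2" "1 \<le> m"
  shows "(real m + 1) powr (- al) / \<bar>Gamma (1 - al)\<bar> \<le> - g_coef (al - 1) m"
proof -
  have Gn: "Gamma (1 - al) < 0" by (rule Gamma_neg[OF assms(1,2)])
  have "- g_coef (al - 1) m = - (Gamma (1 - al + real m) / Gamma (1 - al)) / fact m"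
    unfolding g_coef_poch using pochhammer_Gamma[OF not_nonpos_int[OF assms(1,2)], of m] by simp
  also have "\<dots> = Gamma (real m + 1 - al) / (\<bar>Gamma (1 - al)\<bar> * fact m)"
    using Gn by (simp add: field_simps)
  finally have e: "- g_coef (al - 1) m = Gamma (real m + 1 - al) / (\<bar>Gamma (1 - al)\<bar> * fact m)" .
  have fr: "fact m \<le> Gamma (real m + 1 - al) * (real m + 1) powr al" by (rule Gamma_ratio[OF assms])
  have p: "0 < (real m + 1) powr al" by simp
  define A where "A = \<bar>Gamma (1 - al)\<bar>"
  have A: "0 < A" unfolding A_def using Gn by simp
  define Gm where "Gm = Gamma (real m + 1 - al)"
  define P where "P = (real m + 1) powr al"
  have fpos: "0 < (fact m :: real)" by simp
  have "(real m + 1) powr (- al) = 1 / P" unfolding P_def by (simp add: powr_minus divide_inverse)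
  moreover have "1 / P \<le> Gm / fact m"
    using fr p fpos unfolding Gm_def[symmetric] P_def[symmetric] by (simp add: field_simps)
  moreover have "1 / P / A \<le> Gm / fact m / A" using A \<open>1 / P \<le> _\<close> by (intro divide_right_mono) auto
  ultimately have "(real m + 1) powr (- al) / A \<le> (Gm / fact m) / A" by simp
  then show ?thesis using e unfolding A_def[symmetric] Gm_def[symmetric] by (simp add: mult.commute)
qed


definition Pw :: "real \<Rightarrow> nat \<Rightarrow> real" where
  "Pw al m = (\<Sum>k=0..m. w_coef al k)"

lemma Pw_formula:
  "Pw al m = al / 2 * g_coef (al - 1) m + (2 - al) / 2 * (if m = 0 then 0 else g_coef (al - 1) (m - 1))"
proof (induction m)
  case 0
  then show ?case by (simp add: Pw_def w_coef_def g_coef_def)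
next
  case (Suc m)
  have G1: "g_coef (al - 1) (Suc m) = g_coef (al - 1) m + g_coef al (Suc m)"
    using g_coef_sum[of al "Suc m"] g_coef_sum[of al m] by simp
  have G2: "g_coef (al - 1) m = (if m = 0 then 0 else g_coef (al - 1) (m - 1)) + g_coef al m"
  proof (cases m)
    case 0
    then show ?thesis using g_coef_sum[of al 0] by simp
  next
    case (Suc m')
    then show ?thesis using g_coef_sum[of al m] g_coef_sum[of al m'] by simp
  qed
  have "Pw al (Suc m) = Pw al m + w_coef al (Suc m)" by (simp add: Pw_def)
  also have "\<dots> = al / 2 * g_coef (al - 1) (Suc m) + (2 - al) / 2 * g_coef (al - 1) m"
    unfolding Suc w_coef_def using G1 G2 by (simp add: algebra_simps)
  finally show ?case by simp
qed

lemma Qb_bound: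
  fixes al :: real
  assumes al: "1 < al" "al < 2" and m: "1 \<le> m"
  shows "- g_coef (al - 1) m \<le> - Pw al m + (if m = 1 then w_coef al 0 else 0)"
proof (cases "m = 1")
  case True
  have G1: "g_coef (al - 1) 1 = 1 - al" by (simp add: g_coef_def)
  have G0: "g_coef (al - 1) 0 = 1" by (simp add: g_coef_def)
  have w0: "w_coef al 0 = al / 2" by (simp add: w_coef_def g_coef_def)
  have P1: "Pw al 1 = al / 2 * (1 - al) + (2 - al) / 2"
    using Pw_formula[of al 1] G1 G0 by simp
  have "- Pw al 1 + w_coef al 0 - (- g_coef (al - 1) 1) = al * (al - 1) / 2"
    unfolding P1 w0 G1 by (simp add: field_simps)
  moreover have "0 \<le> al * (al - 1) / 2" using al by simp
  ultimately show ?thesis using True by simp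
next
  case False
  then have m2: "2 \<le> m" using m by simp
  have "g_coef (al - 1) (m - 1) \<le> g_coef (al - 1) m" by (rule G_mono[OF al m2])
  then have "al / 2 * g_coef (al - 1) m + (2 - al) / 2 * g_coef (al - 1) (m - 1)
      \<le> al / 2 * g_coef (al - 1) m + (2 - al) / 2 * g_coef (al - 1) m"
    using al by (intro add_left_mono mult_left_mono) auto
  moreover have "al / 2 * g_coef (al - 1) m + (2 - al) / 2 * g_coef (al - 1) m = g_coef (al - 1) m"
    by (simp add: field_simps)
  moreover have "Pw al m = al / 2 * g_coef (al - 1) m + (2 - al) / 2 * g_coef (al - 1) (m - 1)"
    using Pw_formula[of al m] m by simp
  ultimately show ?thesis using False by simp
qed

definition Aw :: "real \<Rightarrow> nat \<Rightarrow> nat \<Rightarrow> real" where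
  "Aw al i j = (if j \<le> i + 1 then w_coef al (i + 1 - j) else 0)"

lemma wmat_split: "w_mat al i j = Aw al i j + Aw al j i"
  unfolding w_mat_def Aw_def by (auto simp: Suc_diff_le numeral_2_eq_2)

lemma rev_sum: "1 \<le> (n::nat) \<Longrightarrow> (\<Sum>j=1..n. f (n - j)) = (\<Sum>k=0..n - 1. (f k :: real))"
  by (rule sum.reindex_bij_witness[where i="\<lambda>k. n - k" and j="\<lambda>j. n - j"]) auto

lemma RA:
  assumes i: "1 \<le> i" "i \<le> M - 1"
  shows "(\<Sum>j=1..M-1. Aw al i j) = Pw al i - (if i = M - 1 then w_coef al 0 else 0)"
proof -
  have "(\<Sum>j=1..M-1. Aw al i j) = (\<Sum>j\<in>{j\<in>{1..M-1}. j \<le> i + 1}. w_coef al (i + 1 - j))"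
    unfolding Aw_def by (rule sum.inter_filter[symmetric]) simp
  show ?thesis
  proof (cases "i = M - 1")
    case True
    have s: "{j\<in>{1..M-1}. j \<le> i + 1} = {1..i}" using True by auto
    have "(\<Sum>j=1..i. w_coef al (i + 1 - j)) = (\<Sum>j=1..i. (\<lambda>k. w_coef al (k + 1)) (i - j))"
      by (intro sum.cong refl) (simp add: Suc_diff_le)
    also have "\<dots> = (\<Sum>k=0..i - 1. w_coef al (k + 1))" by (rule rev_sum) (use i in simp)
    also have "\<dots> = (\<Sum>k=1..i. w_coef al k)"
      using i by (intro sum.reindex_bij_witness[where i="\<lambda>k. k - 1" and j="\<lambda>k. k + 1"]) auto
    also have "\<dots> = Pw al i - w_coef al 0"
      unfolding Pw_def by (simp add: sum.atLeast_Suc_atMost)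
    finally show ?thesis using True \<open>(\<Sum>j=1..M-1. Aw al i j) = _\<close> s by simp
  next
    case False
    have s: "{j\<in>{1..M-1}. j \<le> i + 1} = {1..i+1}" using False i by auto
    have "(\<Sum>j=1..i+1. w_coef al (i + 1 - j)) = (\<Sum>k=0..i. w_coef al k)"
      using rev_sum[of "i + 1" "w_coef al"] by simp
    then show ?thesis using False \<open>(\<Sum>j=1..M-1. Aw al i j) = _\<close> s unfolding Pw_def by simp
  qed
qed

lemma RB:
  assumes i: "1 \<le> i" "i \<le> M - 1"
  shows "(\<Sum>j=1..M-1. Aw al j i) = Pw al (M - i) - (if i = 1 then w_coef al 0 else 0)"
proof -
  have e: "(\<Sum>j=1..M-1. Aw al j i) = (\<Sum>j\<in>{j\<in>{1..M-1}. i \<le> j + 1}. w_coef al (j + 1 - i))"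
    unfolding Aw_def by (rule sum.inter_filter[symmetric]) simp
  show ?thesis
  proof (cases "i = 1")
    case True
    have s: "{j\<in>{1..M-1}. i \<le> j + 1} = {1..M-1}" using True by auto
    have "(\<Sum>j=1..M-1. w_coef al (j + 1 - i)) = (\<Sum>j=1..M-1. w_coef al j)" using True by simp
    also have "\<dots> = Pw al (M - 1) - w_coef al 0"
      unfolding Pw_def by (simp add: sum.atLeast_Suc_atMost)
    finally show ?thesis using True e s by simp
  next
    case False
    have s: "{j\<in>{1..M-1}. i \<le> j + 1} = {i-1..M-1}" using False i by auto
    have "(\<Sum>j=i-1..M-1. w_coef al (j + 1 - i)) = (\<Sum>k=0..M-i. w_coef al k)"
      using i False by (intro sum.reindex_bij_witness[where i="\<lambda>k. k + i - 1" and j="\<lambda>j. j + 1 - i"]) auto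
    then show ?thesis using False e s unfolding Pw_def by simp
  qed
qed

lemma quad_lower:
  fixes a :: "nat \<Rightarrow> nat \<Rightarrow> real" and x :: "nat \<Rightarrow> complex" and I :: "nat set"
  assumes fin: "finite I" and sym: "\<And>i j. a i j = a j i"
    and off: "\<And>i j. i \<in> I \<Longrightarrow> j \<in> I \<Longrightarrow> i \<noteq> j \<Longrightarrow> a i j \<le> 0"
  shows "(\<Sum>i\<in>I. (\<Sum>j\<in>I. a i j) * (norm (x i))^2)
          \<le> Re (\<Sum>i\<in>I. \<Sum>j\<in>I. cnj (x i) * of_real (a i j) * x j)"
proof -
  have bnd: "a i j * ((norm (x i))^2 + (norm (x j))^2) / 2 \<le> Re (cnj (x i) * of_real (a i j) * x j)"
    if "i \<in> I" "j \<in> I" for i j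
  proof (cases "i = j")
    case True
    have "cnj (x i) * of_real (a i i) * x i = of_real (a i i) * (x i * cnj (x i))" by (simp add: mult_ac)
    also have "\<dots> = of_real (a i i * (norm (x i))^2)" by (simp add: complex_norm_square[symmetric])
    finally have "Re (cnj (x i) * of_real (a i i) * x i) = Re (of_real (a i i * (norm (x i))^2))"
      by (rule arg_cong)
    then have "Re (cnj (x i) * of_real (a i i) * x i) = a i i * (norm (x i))^2"
      by (simp only: Re_complex_of_real)
    then show ?thesis using True by simp
  next
    case False
    have aij: "a i j \<le> 0" using off that False by simp
    have "Re (cnj (x i) * x j) \<le> norm (cnj (x i) * x j)" by (rule complex_Re_le_cmod)
    also have "\<dots> = norm (x i) * norm (x j)" by (simp add: norm_mult)
    also have "\<dots> \<le> ((norm (x i))^2 + (norm (x j))^2) / 2"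
      using sum_squares_bound[of "norm (x i)" "norm (x j)"] by (simp add: field_simps power2_eq_square)
    finally have r: "Re (cnj (x i) * x j) \<le> ((norm (x i))^2 + (norm (x j))^2) / 2" .
    have "a i j * (((norm (x i))^2 + (norm (x j))^2) / 2) \<le> a i j * Re (cnj (x i) * x j)"
      using r aij by (rule mult_left_mono_neg)
    moreover have "Re (cnj (x i) * of_real (a i j) * x j) = a i j * Re (cnj (x i) * x j)"
      by (simp add: algebra_simps)
    ultimately show ?thesis by simp
  qed
  have "(\<Sum>i\<in>I. \<Sum>j\<in>I. a i j * ((norm (x i))^2 + (norm (x j))^2) / 2)
      \<le> (\<Sum>i\<in>I. \<Sum>j\<in>I. Re (cnj (x i) * of_real (a i j) * x j))"
    using bnd by (intro sum_mono) auto
  also have "\<dots> = Re (\<Sum>i\<in>I. \<Sum>j\<in>I. cnj (x i) * of_real (a i j) * x j)" by simp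
  finally have 1: "(\<Sum>i\<in>I. \<Sum>j\<in>I. a i j * ((norm (x i))^2 + (norm (x j))^2) / 2) \<le> \<dots>" .
  have "(\<Sum>i\<in>I. \<Sum>j\<in>I. a i j * ((norm (x i))^2 + (norm (x j))^2) / 2)
      = ((\<Sum>i\<in>I. \<Sum>j\<in>I. a i j * (norm (x i))^2) + (\<Sum>i\<in>I. \<Sum>j\<in>I. a i j * (norm (x j))^2)) / 2"
    by (simp only: distrib_left add_divide_distrib sum.distrib) (simp add: sum_divide_distrib)
  also have "(\<Sum>i\<in>I. \<Sum>j\<in>I. a i j * (norm (x j))^2) = (\<Sum>i\<in>I. \<Sum>j\<in>I. a i j * (norm (x i))^2)"
    by (subst sum.swap) (simp add: sym)
  also have "(\<Sum>i\<in>I. \<Sum>j\<in>I. a i j * (norm (x i))^2) = (\<Sum>i\<in>I. (\<Sum>j\<in>I. a i j) * (norm (x i))^2)"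
    by (simp add: sum_distrib_right)
  finally show ?thesis using 1 by simp
qed

lemma wmat_sym: "w_mat al i j = w_mat al j i"
  by (simp add: wmat_split)

lemma w_coef_nonneg3:
  fixes al :: real assumes "1 < al" "al < 2" "3 \<le> k"
  shows "0 \<le> w_coef al k"
proof -
  have "0 \<le> g_coef al k" "0 \<le> g_coef al (k - 1)" using assms by (auto intro!: g_coef_nonneg)
  then show ?thesis unfolding w_coef_def using assms by auto
qed

lemma wmat_off_nonneg:
  fixes al :: real assumes al: "1 < al" "al < 2" and ij: "i \<noteq> j"
  shows "0 \<le> w_mat al i j"
proof -
  have w02: "0 \<le> w_coef al 0 + w_coef al 2"
  proof -
    have g1: "g_coef al 1 = - al" by (simp add: g_coef_def)
    have g2: "g_coef al 2 = al * (al - 1) / 2"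
      by (simp add: g_coef_poch numeral_2_eq_2 pochhammer_Suc field_simps)
    have "w_coef al 0 + w_coef al 2 = al / 2 + (al / 2 * (al * (al - 1) / 2) + (2 - al) / 2 * (- al))"
      using g1 g2 by (simp add: w_coef_def g_coef_def)
    also have "\<dots> = al * (al - 1) * (al + 2) / 4" by (simp add: field_simps)
    finally have "w_coef al 0 + w_coef al 2 = al * (al - 1) * (al + 2) / 4" .
    moreover have "0 \<le> al * (al - 1) * (al + 2)" using al by (intro mult_nonneg_nonneg) auto
    ultimately show ?thesis by simp
  qed
  show ?thesis unfolding w_mat_def using ij w02 w_coef_nonneg3[OF al] by auto
qed

lemma row_sum_bound:
  fixes al :: real
  assumes al: "1 < al" "al < 2" and M: "2 \<le> M" and i: "1 \<le> i" "i \<le> M - 1"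
  shows "2 * real M powr (- al) / \<bar>Gamma (1 - al)\<bar> \<le> - (\<Sum>j=1..M-1. w_mat al i j)"
proof -
  have "(\<Sum>j=1..M-1. w_mat al i j) = (\<Sum>j=1..M-1. Aw al i j) + (\<Sum>j=1..M-1. Aw al j i)"
    by (simp add: wmat_split sum.distrib)
  also have "\<dots> = Pw al i - (if i = M - 1 then w_coef al 0 else 0) + (Pw al (M - i) - (if i = 1 then w_coef al 0 else 0))"
    using RA[OF i] RB[OF i] by simp
  finally have e: "- (\<Sum>j=1..M-1. w_mat al i j)
     = (- Pw al i + (if i = 1 then w_coef al 0 else 0)) + (- Pw al (M - i) + (if M - i = 1 then w_coef al 0 else 0))"
    using i M by auto
  have gam: "0 < \<bar>Gamma (1 - al)\<bar>" using Gamma_neg[OF al] by simp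
  have bnd: "real M powr (- al) / \<bar>Gamma (1 - al)\<bar> \<le> - Pw al m + (if m = 1 then w_coef al 0 else 0)"
    if m: "1 \<le> m" "m + 1 \<le> M" for m
  proof -
    have "real M powr (- al) \<le> (real m + 1) powr (- al)"
      using m al by (intro powr_mono2') auto
    then have "real M powr (- al) / \<bar>Gamma (1 - al)\<bar> \<le> (real m + 1) powr (- al) / \<bar>Gamma (1 - al)\<bar>"
      using gam by (intro divide_right_mono) auto
    also have "\<dots> \<le> - g_coef (al - 1) m" by (rule G_bound[OF al m(1)])
    also have "\<dots> \<le> - Pw al m + (if m = 1 then w_coef al 0 else 0)" by (rule Qb_bound[OF al m(1)])
    finally show ?thesis .
  qed
  have "real M powr (- al) / \<bar>Gamma (1 - al)\<bar> \<le> - Pw al i + (if i = 1 then w_coef al 0 else 0)"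
    using i M by (intro bnd) auto
  moreover have "real M powr (- al) / \<bar>Gamma (1 - al)\<bar> \<le> - Pw al (M - i) + (if M - i = 1 then w_coef al 0 else 0)"
    using i M by (intro bnd) auto
  ultimately show ?thesis unfolding e by simp
qed

lemma spatial_bound:
  fixes al :: real and x :: "nat \<Rightarrow> complex"
  assumes al: "1 < al" "al < 2" and M: "2 \<le> M"
  shows "2 * real M powr (- al) / \<bar>Gamma (1 - al)\<bar> * (\<Sum>i=1..M-1. (norm (x i))^2)
     \<le> Re (\<Sum>i=1..M-1. \<Sum>j=1..M-1. cnj (x i) * of_real (- w_mat al i j) * x j)"
proof -
  have "(\<Sum>i=1..M-1. (\<Sum>j=1..M-1. - w_mat al i j) * (norm (x i))^2)
     \<le> Re (\<Sum>i=1..M-1. \<Sum>j=1..M-1. cnj (x i) * of_real (- w_mat al i j) * x j)"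
    by (rule quad_lower) (auto simp: wmat_sym intro: wmat_off_nonneg[OF al])
  moreover have "2 * real M powr (- al) / \<bar>Gamma (1 - al)\<bar> * (\<Sum>i=1..M-1. (norm (x i))^2)
      \<le> (\<Sum>i=1..M-1. (\<Sum>j=1..M-1. - w_mat al i j) * (norm (x i))^2)"
    unfolding sum_distrib_left
  proof (rule sum_mono)
    fix i assume "i \<in> {1..M-1}"
    then have "2 * real M powr (- al) / \<bar>Gamma (1 - al)\<bar> \<le> (\<Sum>j=1..M-1. - w_mat al i j)"
      using row_sum_bound[OF al M, of i] by (simp add: sum_negf)
    then show "2 * real M powr (- al) / \<bar>Gamma (1 - al)\<bar> * (norm (x i))^2
        \<le> (\<Sum>j=1..M-1. - w_mat al i j) * (norm (x i))^2"
      by (intro mult_right_mono) auto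
  qed
  ultimately show ?thesis by linarith
qed


lemma scheme_L_diff:
  "scheme_L g al lam rho eta K b M tau U V1 i n - scheme_L g al lam rho eta K b M tau U V2 i n
   = scheme_L g al lam rho eta K b M tau U (\<lambda>j m. V1 j m - V2 j m) i n"
  unfolding scheme_L_def by (simp add: sum_subtractf algebra_simps)

lemma scheme_R_cong:
  "V0 i = W0 i \<Longrightarrow> scheme_R g lam rho eta b M tau U f V0 i n = scheme_R g lam rho eta b M tau U f W0 i n"
  unfolding scheme_R_def by simp

lemma sum_0M:
  fixes F :: "nat \<Rightarrow> complex"
  assumes "2 \<le> M" "F 0 = 0" "F M = 0"
  shows "(\<Sum>j=0..M. F j) = (\<Sum>j=1..M-1. F j)"
proof -
  have "(\<Sum>j=0..M. F j) = F 0 + (\<Sum>j=1..M. F j)" by (simp add: sum.atLeast_Suc_atMost)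
  also have "(\<Sum>j=1..M. F j) = (\<Sum>j=1..M-1. F j) + F M"
  proof -
    obtain M' where M': "M = Suc M'" using assms by (cases M) auto
    then show ?thesis using assms by (simp add: sum.cl_ivl_Suc)
  qed
  finally show ?thesis using assms by simp
qed

lemma time_coef:
  fixes g lam rho eta tau Uy :: real and k :: nat
  assumes "0 \<le> Uy"
  defines "q \<equiv> exp (- lam * tau)"
  defines "z0 \<equiv> complex_of_real (exp (- (lam + rho * Uy) * tau)) * exp (- \<i> * complex_of_real (eta * Uy * tau))"
  shows "complex_of_real (l2_mod g lam rho tau (\<lambda>_. Uy) y k) * exp (- \<i> * complex_of_real (eta * Uy * real k * tau))
        = (if k = 0 then of_real (l2_coef g 0 - sfun q powr g) else of_real (l2_coef g k) * z0 ^ k)"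
proof (cases "k = 0")
  case True
  have "(\<Sum>l=1..(2::nat). (1 - exp (- lam * tau)) ^ l / real l) = sfun q"
    unfolding sfun_def q_def by (simp add: numeral_2_eq_2 sum.atLeast_Suc_atMost power2_eq_square)
  then show ?thesis using True unfolding l2_mod_def by simp
next
  case False
  have e1: "exp (- (lam + rho * Uy) * real k * tau) = exp (- (lam + rho * Uy) * tau) ^ k"
    by (simp flip: exp_of_nat_mult add: mult_ac)
  have e2: "exp (- \<i> * complex_of_real (eta * Uy * real k * tau)) = exp (- \<i> * complex_of_real (eta * Uy * tau)) ^ k"
    by (simp flip: exp_of_nat_mult add: mult_ac)
  have e3: "l2_mod g lam rho tau (\<lambda>_. Uy) y k = exp (- (lam + rho * Uy) * tau) ^ k * l2_coef g k"
    using False unfolding l2_mod_def e1 by simp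
  show ?thesis using False unfolding e3 e2 z0_def by (simp add: power_mult_distrib)
qed


lemma kappa_pos:
  assumes "1 < al" "al < 2" "0 < K"
  shows "0 < kappa K al"
proof -
  have "0 < cos (pi - al * pi / 2)"
    using assms by (intro cos_gt_zero_pi) (auto simp: field_simps)
  then have c: "cos (al * pi / 2) < 0" by (simp add: cos_diff)
  then have c2: "1 / (2 * cos (al * pi / 2)) < 0" by simp
  have "- K < 0" using assms by simp
  from this c2
  show ?thesis unfolding kappa_def kappa_alpha_def by (rule mult_neg_neg)
qed

theorem theorem3p10:
  fixes \<gamma> \<alpha> lam \<rho> \<eta> K b T \<tau> C\<^sub>G :: real
    and M N :: nat
    and U :: "real \<Rightarrow> real"
    and G :: "real \<Rightarrow> real \<Rightarrow> complex"
    and f :: "real \<Rightarrow> real \<Rightarrow> complex"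
    and Gh :: "nat \<Rightarrow> nat \<Rightarrow> complex"
  assumes "0 < \<gamma>" "\<gamma> < 1" "1 < \<alpha>" "\<alpha> < 2" "0 \<le> lam" "0 < \<rho>"
    and "0 < K" "0 < b" "0 < T"
    and "\<forall>y\<in>{0..b}. 0 \<le> U y"
    and "2 \<le> M" "1 \<le> N" "0 < \<tau>" "real N * \<tau> \<le> T"
    and "\<forall>t\<in>{0..T}. G 0 t = 0 \<and> G b t = 0"
    and "\<forall>i\<le>M. Gh i 0 = G (grid_x b M i) 0"
    and "\<forall>n\<in>{1..N}. Gh 0 n = 0 \<and> Gh M n = 0"
    and "\<forall>i\<in>{1..M-1}. \<forall>n\<in>{1..N}.
           scheme_L \<gamma> \<alpha> lam \<rho> \<eta> K b M \<tau> U Gh i n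
             = scheme_R \<gamma> lam \<rho> \<eta> b M \<tau> U f (\<lambda>j. Gh j 0) i n"
    and "0 < C\<^sub>G"
    and "\<forall>i\<in>{1..M-1}. \<forall>n\<in>{1..N}.
           cmod (scheme_L \<gamma> \<alpha> lam \<rho> \<eta> K b M \<tau> U (\<lambda>j m. G (grid_x b M j) (real m * \<tau>)) i n
                 - scheme_R \<gamma> lam \<rho> \<eta> b M \<tau> U f (\<lambda>j. G (grid_x b M j) 0) i n)
             \<le> C\<^sub>G * (\<tau>\<^sup>2 + (b / real M)\<^sup>2)"
  shows "\<tau> * (\<Sum>n=1..N. grid_norm b M (\<lambda>i. G (grid_x b M i) (real n * \<tau>) - Gh i n))
           \<le> C\<^sub>G * \<bar>Gamma (1 - \<alpha>)\<bar> * b powr (\<alpha> + 1/2) * T / (2 * kappa K \<alpha>)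
               * (\<tau>\<^sup>2 + (b / real M)\<^sup>2)"
proof -
  note A = assms
  define h where "h = b / real M"
  define I where "I = {1..M-1}"
  define NN where "NN = {1..N}"
  define e where "e = (\<lambda>i n. G (grid_x b M i) (real n * \<tau>) - Gh i n)"
  define r where "r = (\<lambda>i n. scheme_L \<gamma> \<alpha> lam \<rho> \<eta> K b M \<tau> U (\<lambda>j m. G (grid_x b M j) (real m * \<tau>)) i n
                 - scheme_R \<gamma> lam \<rho> \<eta> b M \<tau> U f (\<lambda>j. G (grid_x b M j) 0) i n)"
  define \<delta> where "\<delta> = C\<^sub>G * (\<tau>\<^sup>2 + h\<^sup>2)"
  define k0 where "k0 = kappa K \<alpha>"
  define ct where "ct = 1 / \<tau> powr \<gamma>"
  define cs where "cs = k0 / h powr \<alpha>"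
  define a where "a = (\<lambda>i k. complex_of_real (l2_mod \<gamma> lam \<rho> \<tau> U (grid_x b M i) k)
                          * exp (- \<i> * complex_of_real (\<eta> * U (grid_x b M i) * real k * \<tau>)))"
  define cg where "cg = 2 * real M powr (- \<alpha>) / \<bar>Gamma (1 - \<alpha>)\<bar>"
  define E where "E = (\<lambda>n. \<Sum>i\<in>I. (norm (e i n))^2)"
  have M2: "2 \<le> M" using A by simp
  have hpos: "0 < h" unfolding h_def using A by simp
  have k0pos: "0 < k0" unfolding k0_def using kappa_pos A by simp
  have ctpos: "0 < ct" unfolding ct_def using A by simp
  have cspos: "0 < cs" unfolding cs_def using k0pos hpos by simp
  have gam: "0 < \<bar>Gamma (1 - \<alpha>)\<bar>" using Gamma_neg[of \<alpha>] A by simp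
  have cgpos: "0 < cg" unfolding cg_def using gam M2 by simp
  have \<delta>0: "0 \<le> \<delta>" unfolding \<delta>_def using A by simp
  have gridin: "grid_x b M i \<in> {0..b}" if "i \<le> M" for i
  proof -
    have "real i * (b / real M) \<le> real M * (b / real M)" using that A by (intro mult_right_mono) auto
    then show ?thesis unfolding grid_x_def using A M2 by auto
  qed
  have e0: "e i 0 = 0" if "i \<le> M" for i unfolding e_def using A(16) that by simp
  have eB: "e 0 n = 0 \<and> e M n = 0" if "n \<in> NN" for n
  proof -
    have t: "real n * \<tau> \<in> {0..T}"
    proof -
      have "real n * \<tau> \<le> real N * \<tau>" using that A unfolding NN_def by (intro mult_right_mono) auto
      then have "real n * \<tau> \<le> T" using A(14) by linarith
      moreover have "0 \<le> real n * \<tau>" using A by simp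
      ultimately show ?thesis by simp
    qed
    have g0: "grid_x b M 0 = 0" "grid_x b M M = b" unfolding grid_x_def using M2 by auto
    show ?thesis unfolding e_def using A(15) A(17) t that g0 unfolding NN_def by auto
  qed
  have Lr: "scheme_L \<gamma> \<alpha> lam \<rho> \<eta> K b M \<tau> U e i n = r i n" if i: "i \<in> I" and n: "n \<in> NN" for i n
  proof -
    have "scheme_L \<gamma> \<alpha> lam \<rho> \<eta> K b M \<tau> U e i n
        = scheme_L \<gamma> \<alpha> lam \<rho> \<eta> K b M \<tau> U (\<lambda>j m. G (grid_x b M j) (real m * \<tau>)) i n
          - scheme_L \<gamma> \<alpha> lam \<rho> \<eta> K b M \<tau> U Gh i n"
      unfolding scheme_L_diff e_def by simp
    also have "scheme_L \<gamma> \<alpha> lam \<rho> \<eta> K b M \<tau> U Gh i n = scheme_R \<gamma> lam \<rho> \<eta> b M \<tau> U f (\<lambda>j. Gh j 0) i n"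
      using A(18) i n unfolding I_def NN_def by blast
    also have "\<dots> = scheme_R \<gamma> lam \<rho> \<eta> b M \<tau> U f (\<lambda>j. G (grid_x b M j) 0) i n"
      by (rule scheme_R_cong) (use A(16) i in \<open>auto simp: I_def\<close>)
    finally show ?thesis unfolding r_def .
  qed
  have rb: "norm (r i n) \<le> \<delta>" if "i \<in> I" "n \<in> NN" for i n
    using A(20) that unfolding r_def \<delta>_def h_def I_def NN_def by blast
  have Lsplit: "scheme_L \<gamma> \<alpha> lam \<rho> \<eta> K b M \<tau> U e i n
      = of_real ct * (\<Sum>k=0..n. a i k * e i (n - k)) - of_real cs * (\<Sum>j\<in>I. of_real (w_mat \<alpha> i j) * e j n)"
    if "n \<in> NN" for i n
  proof -
    have "(\<Sum>j=0..M. of_real (w_mat \<alpha> i j) * e j n) = (\<Sum>j=1..M-1. of_real (w_mat \<alpha> i j) * e j n)"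
      by (rule sum_0M) (use M2 eB[OF that] in auto)
    then show ?thesis unfolding scheme_L_def a_def ct_def cs_def k0_def h_def I_def by simp
  qed
  define Tt where "Tt = (\<lambda>i n. \<Sum>k=0..n. a i k * e i (n - k))"
  define Y where "Y = (\<lambda>n. \<Sum>i\<in>I. \<Sum>j\<in>I. cnj (e i n) * of_real (- w_mat \<alpha> i j) * e j n)"
  have pt: "cnj (e i n) * r i n = of_real ct * (cnj (e i n) * Tt i n)
        + of_real cs * (\<Sum>j\<in>I. cnj (e i n) * of_real (- w_mat \<alpha> i j) * e j n)"
    if i: "i \<in> I" and n: "n \<in> NN" for i n
  proof -
    have "cnj (e i n) * r i n = cnj (e i n) * (of_real ct * Tt i n - of_real cs * (\<Sum>j\<in>I. of_real (w_mat \<alpha> i j) * e j n))"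
      using Lr[OF i n] Lsplit[OF n] unfolding Tt_def by simp
    also have "\<dots> = of_real ct * (cnj (e i n) * Tt i n) - of_real cs * (\<Sum>j\<in>I. cnj (e i n) * of_real (w_mat \<alpha> i j) * e j n)"
      by (simp add: sum_distrib_left algebra_simps)
    also have "(\<Sum>j\<in>I. cnj (e i n) * of_real (w_mat \<alpha> i j) * e j n) = - (\<Sum>j\<in>I. cnj (e i n) * of_real (- w_mat \<alpha> i j) * e j n)"
      by (simp add: sum_negf)
    finally show ?thesis by simp
  qed
  have energy: "(\<Sum>n\<in>NN. \<Sum>i\<in>I. cnj (e i n) * r i n)
      = of_real ct * (\<Sum>i\<in>I. \<Sum>n\<in>NN. cnj (e i n) * Tt i n) + of_real cs * (\<Sum>n\<in>NN. Y n)"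
  proof -
    have "(\<Sum>n\<in>NN. \<Sum>i\<in>I. cnj (e i n) * r i n)
        = (\<Sum>n\<in>NN. \<Sum>i\<in>I. of_real ct * (cnj (e i n) * Tt i n)
            + of_real cs * (\<Sum>j\<in>I. cnj (e i n) * of_real (- w_mat \<alpha> i j) * e j n))"
      by (intro sum.cong refl pt)
    also have "\<dots> = of_real ct * (\<Sum>n\<in>NN. \<Sum>i\<in>I. cnj (e i n) * Tt i n) + of_real cs * (\<Sum>n\<in>NN. Y n)"
      unfolding Y_def by (simp add: sum.distrib sum_distrib_left)
    also have "(\<Sum>n\<in>NN. \<Sum>i\<in>I. cnj (e i n) * Tt i n) = (\<Sum>i\<in>I. \<Sum>n\<in>NN. cnj (e i n) * Tt i n)"
      by (rule sum.swap)
    finally show ?thesis .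
  qed
  have timepos: "0 \<le> Re (\<Sum>n\<in>NN. cnj (e i n) * Tt i n)" if i: "i \<in> I" for i
  proof -
    define Uy where "Uy = U (grid_x b M i)"
    define q where "q = exp (- lam * \<tau>)"
    define z0 where "z0 = complex_of_real (exp (- (lam + \<rho> * Uy) * \<tau>)) * exp (- \<i> * complex_of_real (\<eta> * Uy * \<tau>))"
    have Uy0: "0 \<le> Uy" unfolding Uy_def using A(10) gridin i unfolding I_def by auto
    have q: "0 < q" "q \<le> 1" unfolding q_def using A by auto
    have nz0: "norm z0 \<le> q"
    proof -
      have "norm (exp (- \<i> * complex_of_real (\<eta> * Uy * \<tau>))) = 1" by simp
      then have "norm z0 = exp (- (lam + \<rho> * Uy) * \<tau>)" unfolding z0_def by (simp add: norm_mult)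
      also have "\<dots> \<le> q"
      proof -
        have "0 \<le> \<rho> * Uy * \<tau>" using Uy0 A by simp
        then have "- (lam + \<rho> * Uy) * \<tau> \<le> - lam * \<tau>" by (simp add: algebra_simps)
        then show ?thesis unfolding q_def by simp
      qed
      finally show ?thesis .
    qed
    have acoef: "a i k = (if k = 0 then of_real (l2_coef \<gamma> 0 - sfun q powr \<gamma>) else of_real (l2_coef \<gamma> k) * z0 ^ k)" for k
    proof -
      have "l2_mod \<gamma> lam \<rho> \<tau> U (grid_x b M i) k = l2_mod \<gamma> lam \<rho> \<tau> (\<lambda>_. Uy) (grid_x b M i) k"
        unfolding l2_mod_def Uy_def by simp
      then show ?thesis unfolding a_def Uy_def[symmetric] q_def z0_def
        using time_coef[OF Uy0, of \<gamma> lam \<rho> \<tau> "grid_x b M i" k \<eta>] by simp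
    qed
    have x0: "e i 0 = 0" using e0 i unfolding I_def by auto
    have "0 \<le> Re (\<Sum>n=1..N. cnj (e i n) * (\<Sum>k=0..n. a i k * e i (n - k)))"
      by (rule time_pos[where a="a i" and x="\<lambda>n. e i n" and N=N, OF A(1,2) q nz0 acoef x0])
    then show ?thesis unfolding Tt_def NN_def .
  qed
  have Ybound: "cg * E n \<le> Re (Y n)" for n
    using spatial_bound[OF A(3,4) M2, of "\<lambda>i. e i n"] unfolding cg_def E_def Y_def I_def by simp
  have E0: "0 \<le> E n" for n unfolding E_def by (simp add: sum_nonneg)
  have lowerRe: "cs * cg * (\<Sum>n\<in>NN. E n) \<le> Re (\<Sum>n\<in>NN. \<Sum>i\<in>I. cnj (e i n) * r i n)"
  proof -
    have "Re (\<Sum>n\<in>NN. \<Sum>i\<in>I. cnj (e i n) * r i n)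
        = ct * (\<Sum>i\<in>I. Re (\<Sum>n\<in>NN. cnj (e i n) * Tt i n)) + cs * (\<Sum>n\<in>NN. Re (Y n))"
      unfolding energy by (simp add: Re_sum)
    moreover have "0 \<le> (\<Sum>i\<in>I. Re (\<Sum>n\<in>NN. cnj (e i n) * Tt i n))"
      by (intro sum_nonneg timepos)
    moreover have "cg * (\<Sum>n\<in>NN. E n) \<le> (\<Sum>n\<in>NN. Re (Y n))"
      unfolding sum_distrib_left by (intro sum_mono Ybound)
    ultimately show ?thesis using ctpos cspos
      by (smt (verit) mult_left_mono mult_nonneg_nonneg mult.assoc)
  qed
  have upperRe: "Re (\<Sum>n\<in>NN. \<Sum>i\<in>I. cnj (e i n) * r i n) \<le> \<delta> * (\<Sum>n\<in>NN. \<Sum>i\<in>I. norm (e i n))"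
  proof -
    have "Re (\<Sum>n\<in>NN. \<Sum>i\<in>I. cnj (e i n) * r i n) \<le> norm (\<Sum>n\<in>NN. \<Sum>i\<in>I. cnj (e i n) * r i n)"
      by (rule complex_Re_le_cmod)
    also have "\<dots> \<le> (\<Sum>n\<in>NN. \<Sum>i\<in>I. norm (cnj (e i n) * r i n))"
      by (rule order_trans[OF norm_sum sum_mono[OF norm_sum]])
    also have "\<dots> \<le> (\<Sum>n\<in>NN. \<Sum>i\<in>I. \<delta> * norm (e i n))"
    proof (intro sum_mono)
      fix n i assume "n \<in> NN" "i \<in> I"
      then have rn: "norm (r i n) \<le> \<delta>" by (rule rb[rotated])
      show "norm (cnj (e i n) * r i n) \<le> \<delta> * norm (e i n)"
        using mult_left_mono[OF rn norm_ge_zero[of "e i n"]] by (simp add: norm_mult mult.commute)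
    qed
    also have "\<dots> = \<delta> * (\<Sum>n\<in>NN. \<Sum>i\<in>I. norm (e i n))" by (simp add: sum_distrib_left)
    finally show ?thesis .
  qed
  define s where "s = (\<lambda>n. sqrt (E n))"
  define S where "S = (\<Sum>n\<in>NN. s n)"
  have S0: "0 \<le> S" unfolding S_def s_def using E0 by (intro sum_nonneg) simp
  have cardI: "card I = M - 1" unfolding I_def by simp
  have cardN: "card NN = N" unfolding NN_def by simp
  have row: "(\<Sum>i\<in>I. norm (e i n)) \<le> sqrt (real (M - 1)) * s n" for n
  proof -
    have "(\<Sum>i\<in>I. norm (e i n))^2 \<le> (\<Sum>i\<in>I. (norm (e i n))^2) * real (card I)"
      by (rule sum_squared_le_sum_of_squares)
    then have "(\<Sum>i\<in>I. norm (e i n)) \<le> sqrt (E n * real (M - 1))"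
      unfolding E_def cardI by (rule real_le_rsqrt)
    then show ?thesis unfolding s_def by (simp add: real_sqrt_mult mult.commute)
  qed
  have A1: "(\<Sum>n\<in>NN. \<Sum>i\<in>I. norm (e i n)) \<le> sqrt (real (M - 1)) * S"
    unfolding S_def sum_distrib_left by (intro sum_mono row)
  have A2: "S^2 \<le> real N * (\<Sum>n\<in>NN. E n)"
  proof -
    have "S^2 \<le> (\<Sum>n\<in>NN. (s n)^2) * real (card NN)" unfolding S_def by (rule sum_squared_le_sum_of_squares)
    also have "(\<Sum>n\<in>NN. (s n)^2) = (\<Sum>n\<in>NN. E n)" unfolding s_def using E0 by simp
    finally show ?thesis unfolding cardN by (simp add: mult.commute)
  qed
  define mu where "mu = cs * cg"
  have mupos: "0 < mu" unfolding mu_def using cspos cgpos by simp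
  have B: "mu * (\<Sum>n\<in>NN. E n) \<le> \<delta> * sqrt (real (M - 1)) * S"
  proof -
    have "mu * (\<Sum>n\<in>NN. E n) \<le> \<delta> * (\<Sum>n\<in>NN. \<Sum>i\<in>I. norm (e i n))"
      using lowerRe upperRe unfolding mu_def by linarith
    also have "\<dots> \<le> \<delta> * (sqrt (real (M - 1)) * S)" using A1 \<delta>0 by (rule mult_left_mono)
    finally show ?thesis by (simp add: mult.assoc)
  qed
  have key: "S \<le> real N * \<delta> * sqrt (real (M - 1)) / mu"
  proof (cases "S = 0")
    case True
    then show ?thesis using \<delta>0 mupos by simp
  next
    case False
    then have Sp: "0 < S" using S0 by simp
    have "mu * S^2 \<le> mu * (real N * (\<Sum>n\<in>NN. E n))" using A2 mupos by simp
    also have "\<dots> = real N * (mu * (\<Sum>n\<in>NN. E n))" by simp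
    also have "\<dots> \<le> real N * (\<delta> * sqrt (real (M - 1)) * S)" using B by (intro mult_left_mono) auto
    finally have "(mu * S) * S \<le> (real N * \<delta> * sqrt (real (M - 1))) * S"
      by (simp add: power2_eq_square mult_ac)
    then have "mu * S \<le> real N * \<delta> * sqrt (real (M - 1))" using Sp by simp
    then show ?thesis using mupos by (simp add: field_simps)
  qed
  have gn: "grid_norm b M (\<lambda>i. G (grid_x b M i) (real n * \<tau>) - Gh i n) = sqrt h * s n" for n
    unfolding grid_norm_def s_def E_def I_def e_def h_def by (rule real_sqrt_mult)
  have lhs: "\<tau> * (\<Sum>n=1..N. grid_norm b M (\<lambda>i. G (grid_x b M i) (real n * \<tau>) - Gh i n)) = \<tau> * sqrt h * S"
    unfolding gn S_def NN_def by (simp add: sum_distrib_left mult.assoc)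
  have sM: "sqrt (real (M - 1)) \<le> sqrt (real M)" by simp
  have "\<tau> * sqrt h * S \<le> \<tau> * sqrt h * (real N * \<delta> * sqrt (real (M - 1)) / mu)"
    using key A hpos by (intro mult_left_mono) auto
  also have "\<dots> = (real N * \<tau>) * (sqrt h * \<delta> / mu) * sqrt (real (M - 1))" by (simp add: field_simps)
  also have "\<dots> \<le> T * (sqrt h * \<delta> / mu) * sqrt (real M)"
    using A(14) A(9) sM hpos \<delta>0 mupos by (intro mult_mono) (auto simp: mult_nonneg_nonneg)
  also have "\<dots> = C\<^sub>G * \<bar>Gamma (1 - \<alpha>)\<bar> * b powr (\<alpha> + 1/2) * T / (2 * kappa K \<alpha>) * (\<tau>\<^sup>2 + (b / real M)\<^sup>2)"
  proof -
    have Mp: "0 < real M" using M2 by simp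
    have e1: "sqrt h * sqrt (real M) = sqrt b" unfolding h_def using Mp by (simp flip: real_sqrt_mult)
    have e2: "h powr \<alpha> * real M powr \<alpha> = b powr \<alpha>" unfolding h_def using Mp A
      by (simp flip: powr_mult)
    have e3: "real M powr (- \<alpha>) = 1 / real M powr \<alpha>" by (simp add: powr_minus divide_inverse)
    have e4: "b powr (\<alpha> + 1/2) = b powr \<alpha> * sqrt b" using A by (simp add: powr_add powr_half_sqrt)
    have hp: "0 < h powr \<alpha>" "0 < real M powr \<alpha>" using hpos Mp by auto
    have "T * (sqrt h * \<delta> / mu) * sqrt (real M)
        = T * (sqrt h * sqrt (real M)) * \<delta> * (h powr \<alpha> * real M powr \<alpha>) * \<bar>Gamma (1 - \<alpha>)\<bar> / (2 * k0)"
      unfolding mu_def cs_def cg_def e3 using hp k0pos gam by (simp add: field_simps)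
    also have "\<dots> = C\<^sub>G * \<bar>Gamma (1 - \<alpha>)\<bar> * b powr (\<alpha> + 1/2) * T / (2 * k0) * (\<tau>\<^sup>2 + h\<^sup>2)"
      unfolding e1 e2 e4 \<delta>_def by (simp add: field_simps)
    finally show ?thesis unfolding k0_def h_def .
  qed
  finally show ?thesis unfolding lhs .
qed

end
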